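(* Fix $m\ge3$ and let $f$ be an axis rule on profiles over a candidate set $C$ with $|C|=m$ that is the scoring rule induced by $\mathrm{cost}(A,\triangleleft)=g(x_{A,\triangleleft})$ for a function $g:\{0,1\}^m\to\mathbb R_{\ge0}$ with $g(x)=0$ iff the ones of $x$ are contiguous and $g(x)=g(\overleftarrow{x})$ for all $x$. If $f$ satisfies ballot monotonicity, then there is a function $h$ such that for every ballot $A$ and axis $\triangleleft$ with $A$ not an interval of $\triangleleft$, $\mathrm{cost}(A,\triangleleft)=h(k_{\mathrm{app}},k_{\mathrm{int}})$, where $k_{\mathrm{app}}=|A|$ and $k_{\mathrm{int}}$ is the number of interfering candidates of $A$ on $\triangleleft$.
   Context: Let $C$ be a finite set of $m$ candidates. An approval ballot is a nonempty subset $A\subseteq C$; a profile is a finite sequence of ballots. An axis is a strict linear order $\triangleleft$ on $C$; $a\trianglelefteq b$ means $a\triangleleft b$ or $a=b$. A ballot $A$ is an interval of $\triangleleft$ if for all $a,b\in A$ and every $c$ with $a\triangleleft c\triangleleft b$ we have $c\in A$; a candidate $c\notin A$ with $a\triangleleft c\triangleleft b$ for some $a,b\in A$ is interfering. If $\triangleleft=c_1c_2\cdots c_m$, the approval vector $x_{A,\triangleleft}\in\{0,1\}^m$ has $i$-th entry $1$ iff $c_i\in A$; $\overleftarrow{x}$ denotes the reversed vector. The scoring rule induced by $\mathrm{cost}$ is $f(P)=\arg\min_{\triangleleft}\sum_{A\in P}\mathrm{cost}(A,\triangleleft)$. $f$ satisfies ballot monotonicity if for every profile $P$, ballot $A\in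 P$ and $\triangleleft\in f(P)$ such that $A$ is not an interval of $\triangleleft$, we have $\triangleleft\in f(P')$, where $P'$ replaces $A$ by $A'=\{x\in C:\exists y,z\in A,\ y\trianglelefteq x\trianglelefteq z\}$. *)

theory Defs
  imports Complex_Main
begin

text \<open>Candidates form a finite type 'c (so C = UNIV, m = CARD('c)).
An axis (strict linear order) c_1 c_2 ... c_m is represented as the list [c_1,...,c_m]
of all candidates without repetition.\<close>

definition is_axis :: "'c list \<Rightarrow> bool" where
  "is_axis ax \<longleftrightarrow> distinct ax \<and> set ax = UNIV"

definition axes :: "'c list set" where
  "axes = {ax. is_axis ax}"

definition axis_less :: "'c list \<Rightarrow> 'c \<Rightarrow> 'c \<Rightarrow> bool" where
  "axis_less ax a b \<longleftrightarrow> (\<exists>i j. i < j \<and> j < length ax \<and> ax ! i = a \<and> ax ! j = b)"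

definition axis_le :: "'c list \<Rightarrow> 'c \<Rightarrow> 'c \<Rightarrow> bool" where
  "axis_le ax a b \<longleftrightarrow> axis_less ax a b \<or> a = b"

definition is_interval :: "'c set \<Rightarrow> 'c list \<Rightarrow> bool" where
  "is_interval A ax \<longleftrightarrow>
     (\<forall>a\<in>A. \<forall>b\<in>A. \<forall>c. axis_less ax a c \<and> axis_less ax c b \<longrightarrow> c \<in> A)"

definition interfering :: "'c set \<Rightarrow> 'c list \<Rightarrow> 'c set" where
  "interfering A ax = {c. c \<notin> A \<and> (\<exists>a\<in>A. \<exists>b\<in>A. axis_less ax a c \<and> axis_less ax c b)}"

definition interval_hull :: "'c list \<Rightarrow> 'c set \<Rightarrow> 'c set" where
  "interval_hull ax A = {x. \<exists>y\<in>A. \<exists>z\<in>A. axis_le ax y x \<and> axis_le ax x z}"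

definition approval_vector :: "'c set \<Rightarrow> 'c list \<Rightarrow> bool list" where
  "approval_vector A ax = map (\<lambda>c. c \<in> A) ax"

definition contiguous_ones :: "bool list \<Rightarrow> bool" where
  "contiguous_ones x \<longleftrightarrow>
     (\<forall>i j k. i < j \<and> j < k \<and> k < length x \<and> x ! i \<and> x ! k \<longrightarrow> x ! j)"

definition is_ballot :: "'c set \<Rightarrow> bool" where
  "is_ballot A \<longleftrightarrow> A \<noteq> {}"

type_synonym 'c profile = "'c set list"

definition is_profile :: "'c profile \<Rightarrow> bool" where
  "is_profile P \<longleftrightarrow> (\<forall>A\<in>set P. is_ballot A)"

definition total_cost :: "('c set \<Rightarrow> 'c list \<Rightarrow> real) \<Rightarrow> 'c profile \<Rightarrow> 'c list \<Rightarrow> real" where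
  "total_cost cost P ax = (\<Sum>A\<leftarrow>P. cost A ax)"

definition scoring_rule :: "('c set \<Rightarrow> 'c list \<Rightarrow> real) \<Rightarrow> 'c profile \<Rightarrow> 'c list set" where
  "scoring_rule cost P =
     {ax \<in> axes. \<forall>ax' \<in> axes. total_cost cost P ax \<le> total_cost cost P ax'}"

definition ballot_monotone :: "('c profile \<Rightarrow> 'c list set) \<Rightarrow> bool" where
  "ballot_monotone f \<longleftrightarrow>
     (\<forall>P i ax. is_profile P \<and> i < length P \<and> ax \<in> f P \<and> \<not> is_interval (P ! i) ax \<longrightarrow>
        ax \<in> f (P[i := interval_hull ax (P ! i)]))"

end

theory Submission
  imports Defs
begin


definition pos :: "'c list \<Rightarrow> 'c \<Rightarrow> nat" where
  "pos ax c = (THE t. t < length ax \<and> ax ! t = c)"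

definition adj :: "'c list \<Rightarrow> 'c \<Rightarrow> 'c \<Rightarrow> bool" where
  "adj ax u v \<longleftrightarrow> pos ax u = Suc (pos ax v) \<or> pos ax v = Suc (pos ax u)"

definition rng :: "'c list \<Rightarrow> nat \<Rightarrow> nat \<Rightarrow> 'c set" where
  "rng ax lo hi = {ax ! t | t. lo \<le> t \<and> t \<le> hi}"

lemma axis_len: "is_axis (ax::'c::finite list) \<Longrightarrow> length ax = card (UNIV :: 'c set)"
  unfolding is_axis_def by (metis distinct_card)

lemma card_pos: "card (UNIV :: 'c::finite set) > 0" by (simp add: card_gt_0_iff)

lemma pos_props: assumes "is_axis ax" shows "pos ax c < length ax \<and> ax ! pos ax c = c"
proof -
  have "\<exists>!t. t < length ax \<and> ax ! t = c"
    using assms unfolding is_axis_def by (intro distinct_Ex1) auto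
  then show ?thesis unfolding pos_def by (rule theI')
qed

lemma pos_nth: assumes "is_axis ax" "t < length ax" shows "pos ax (ax ! t) = t"
proof -
  have "\<exists>!t'. t' < length ax \<and> ax ! t' = ax ! t"
    using assms unfolding is_axis_def by (intro distinct_Ex1) auto
  then show ?thesis unfolding pos_def using assms by (intro the1_equality) auto
qed

lemma pos_inj: assumes "is_axis ax" "pos ax a = pos ax b" shows "a = b"
  using pos_props[OF assms(1)] assms(2) by metis

lemma axis_less_pos: assumes "is_axis ax" shows "axis_less ax a b \<longleftrightarrow> pos ax a < pos ax b"
proof
  assume "axis_less ax a b"
  then obtain i j where "i < j" "j < length ax" "ax ! i = a" "ax ! j = b" unfolding axis_less_def by blast
  then show "pos ax a < pos ax b" using pos_nth[OF assms] by auto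
next
  assume "pos ax a < pos ax b"
  then show "axis_less ax a b" unfolding axis_less_def using pos_props[OF assms] by blast
qed

lemma interval_pos: assumes "is_axis ax"
  shows "is_interval S ax \<longleftrightarrow> (\<forall>a\<in>S. \<forall>b\<in>S. \<forall>t. pos ax a < t \<and> t < pos ax b \<longrightarrow> ax ! t \<in> S)"
proof
  assume H: "is_interval S ax"
  show "\<forall>a\<in>S. \<forall>b\<in>S. \<forall>t. pos ax a < t \<and> t < pos ax b \<longrightarrow> ax ! t \<in> S"
  proof (intro ballI allI impI)
    fix a b t assume ab: "a \<in> S" "b \<in> S" and t: "pos ax a < t \<and> t < pos ax b"
    have "t < length ax" using t pos_props[OF assms, of b] by auto
    then have pt: "pos ax (ax ! t) = t" by (rule pos_nth[OF assms])
    have "axis_less ax a (ax ! t)" "axis_less ax (ax ! t) b" using t pt axis_less_pos[OF assms] by auto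
    then show "ax ! t \<in> S" using H ab unfolding is_interval_def by blast
  qed
next
  assume H: "\<forall>a\<in>S. \<forall>b\<in>S. \<forall>t. pos ax a < t \<and> t < pos ax b \<longrightarrow> ax ! t \<in> S"
  show "is_interval S ax" unfolding is_interval_def
  proof (intro ballI allI impI)
    fix a b c assume ab: "a \<in> S" "b \<in> S" and c: "axis_less ax a c \<and> axis_less ax c b"
    then have "pos ax a < pos ax c" "pos ax c < pos ax b" using axis_less_pos[OF assms] by auto
    then have "ax ! pos ax c \<in> S" using H ab by blast
    then show "c \<in> S" using pos_props[OF assms] by simp
  qed
qed

lemma nth_av: "t < length ax \<Longrightarrow> approval_vector S ax ! t = (ax ! t \<in> S)"
  unfolding approval_vector_def by simp

lemma len_av[simp]: "length (approval_vector S ax) = length ax"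
  unfolding approval_vector_def by simp

lemma contig_iff: assumes "is_axis ax"
  shows "contiguous_ones (approval_vector S ax) \<longleftrightarrow> is_interval S ax"
proof
  assume H: "contiguous_ones (approval_vector S ax)"
  show "is_interval S ax" unfolding interval_pos[OF assms]
  proof (intro ballI allI impI)
    fix a b t assume ab: "a \<in> S" "b \<in> S" and t: "pos ax a < t \<and> t < pos ax b"
    have pa: "pos ax a < length ax" "ax ! pos ax a = a" using pos_props[OF assms] by auto
    have pb: "pos ax b < length ax" "ax ! pos ax b = b" using pos_props[OF assms] by auto
    have "approval_vector S ax ! pos ax a" "approval_vector S ax ! pos ax b"
      using pa pb ab by (auto simp: nth_av)
    then have "approval_vector S ax ! t" using H t pb unfolding contiguous_ones_def len_av by blast
    then show "ax ! t \<in> S" using t pb by (simp add: nth_av)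
  qed
next
  assume H: "is_interval S ax"
  show "contiguous_ones (approval_vector S ax)" unfolding contiguous_ones_def
  proof (intro allI impI)
    fix i j k assume a: "i < j \<and> j < k \<and> k < length (approval_vector S ax) \<and> approval_vector S ax ! i \<and> approval_vector S ax ! k"
    then have "ax ! i \<in> S" "ax ! k \<in> S" "k < length ax" by (auto simp: nth_av)
    moreover have "pos ax (ax ! i) = i" "pos ax (ax ! k) = k" using a pos_nth[OF assms] by auto
    ultimately have "ax ! j \<in> S" using H a unfolding interval_pos[OF assms] by metis
    then show "approval_vector S ax ! j" using a by (simp add: nth_av)
  qed
qed

lemma rng_interval: assumes ax: "is_axis ax" and hi: "hi < length ax" shows "is_interval (rng ax lo hi) ax"
  unfolding interval_pos[OF ax]
proof (intro ballI allI impI)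
  fix a b t assume a: "a \<in> rng ax lo hi" and b: "b \<in> rng ax lo hi" and t: "pos ax a < t \<and> t < pos ax b"
  obtain t1 where t1: "a = ax ! t1" "lo \<le> t1" "t1 \<le> hi" using a unfolding rng_def by blast
  obtain t2 where t2: "b = ax ! t2" "lo \<le> t2" "t2 \<le> hi" using b unfolding rng_def by blast
  have "pos ax a = t1" using t1 hi pos_nth[OF ax, of t1] by simp
  moreover have "pos ax b = t2" using t2 hi pos_nth[OF ax, of t2] by simp
  ultimately have "lo \<le> t \<and> t \<le> hi" using t t1 t2 by linarith
  then show "ax ! t \<in> rng ax lo hi" unfolding rng_def by blast
qed

lemma interval_adj: assumes "is_axis ax" "u \<noteq> v" "is_interval {u, v} ax" shows "adj ax u v"
proof (rule ccontr)
  assume na: "\<not> adj ax u v"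
  have "pos ax u \<noteq> pos ax v" using assms pos_inj by metis
  then consider "Suc (pos ax u) < pos ax v" | "Suc (pos ax v) < pos ax u" using na unfolding adj_def by linarith
  then show False
  proof cases
    case 1
    then have "ax ! Suc (pos ax u) \<in> {u, v}" using assms(3) unfolding interval_pos[OF assms(1)] by auto
    then show False using 1 pos_nth[OF assms(1), of "Suc (pos ax u)"] pos_props[OF assms(1), of v] by auto
  next
    case 2
    then have "ax ! Suc (pos ax v) \<in> {u, v}" using assms(3) unfolding interval_pos[OF assms(1)] by auto
    then show False using 2 pos_nth[OF assms(1), of "Suc (pos ax v)"] pos_props[OF assms(1), of u] by auto
  qed
qed



definition sg :: "nat \<Rightarrow> nat \<Rightarrow> nat \<Rightarrow> nat" where
  "sg i j t = (if i \<le> t \<and> t \<le> j then i + j - t else t)"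

definition revseg :: "nat \<Rightarrow> nat \<Rightarrow> 'a list \<Rightarrow> 'a list" where
  "revseg i j xs = map (\<lambda>t. xs ! sg i j t) [0..<length xs]"

lemma sg_sg[simp]: "sg i j (sg i j t) = t"
  unfolding sg_def by auto

lemma sg_lt: "j < n \<Longrightarrow> t < n \<Longrightarrow> sg i j t < n"
  unfolding sg_def by auto

lemma length_revseg[simp]: "length (revseg i j xs) = length xs"
  unfolding revseg_def by simp

lemma nth_revseg: "t < length xs \<Longrightarrow> revseg i j xs ! t = xs ! sg i j t"
  unfolding revseg_def by simp

lemma revseg_revseg: assumes "j < length xs" shows "revseg i j (revseg i j xs) = xs"
  by (rule nth_equalityI) (auto simp: nth_revseg sg_lt assms)

lemma map_revseg: assumes "j < length xs" shows "map f (revseg i j xs) = revseg i j (map f xs)"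
  by (rule nth_equalityI) (auto simp: nth_revseg sg_lt assms)

lemma av_revseg: assumes "j < length ax"
  shows "approval_vector S (revseg i j ax) = revseg i j (approval_vector S ax)"
  unfolding approval_vector_def by (rule map_revseg[OF assms])

lemma av_rev: "approval_vector S (rev ax) = rev (approval_vector S ax)"
  unfolding approval_vector_def by (simp add: rev_map)

lemma revseg_full: "revseg 0 (length xs - 1) xs = rev xs"
  by (rule nth_equalityI) (auto simp: nth_revseg sg_def rev_nth)

lemma revseg_axis: assumes ax: "is_axis ax" and j: "j < length ax" shows "is_axis (revseg i j ax)"
proof -
  have inj: "inj_on (sg i j) {0..<length ax}"
    by (metis inj_on_inverseI sg_sg)
  have img: "sg i j ` {0..<length ax} = {0..<length ax}"
  proof
    show "sg i j ` {0..<length ax} \<subseteq> {0..<length ax}" using sg_lt[OF j] by auto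
    show "{0..<length ax} \<subseteq> sg i j ` {0..<length ax}"
    proof
      fix t assume "t \<in> {0..<length ax}"
      then show "t \<in> sg i j ` {0..<length ax}" using sg_lt[OF j] by (metis atLeastLessThan_iff image_eqI sg_sg zero_le)
    qed
  qed
  have "revseg i j ax = map ((!) ax) (map (sg i j) [0..<length ax])"
    unfolding revseg_def by simp
  moreover have "distinct (map (sg i j) [0..<length ax])"
    using inj by (simp add: distinct_map)
  moreover have "set (map (sg i j) [0..<length ax]) = {0..<length ax}" using img by simp
  moreover have "inj_on ((!) ax) {0..<length ax}"
    using ax unfolding is_axis_def by (simp add: inj_on_def nth_eq_iff_index_eq)
  ultimately have "inj_on ((!) ax \<circ> sg i j) {0..<length ax}"
    using comp_inj_on[OF inj, of "(!) ax"] img by simp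
  then have d: "distinct (revseg i j ax)" unfolding revseg_def by (simp add: distinct_map comp_def)
  have "set (revseg i j ax) = (!) ax ` (sg i j ` {0..<length ax})"
    unfolding revseg_def by (simp add: image_image)
  also have "\<dots> = (!) ax ` {0..<length ax}" using img by simp
  also have "\<dots> = set ax" by (auto simp: in_set_conv_nth)
  finally show ?thesis using d ax unfolding is_axis_def by simp
qed

lemma rng_revseg_out:
  assumes "hi < length ax" "j < length ax" "hi < i \<or> j < lo \<or> (lo \<le> i \<and> j \<le> hi)"
  shows "rng (revseg i j ax) lo hi = rng ax lo hi"
proof
  show "rng (revseg i j ax) lo hi \<subseteq> rng ax lo hi"
  proof
    fix c assume "c \<in> rng (revseg i j ax) lo hi"
    then obtain t where t: "c = revseg i j ax ! t" "lo \<le> t" "t \<le> hi" unfolding rng_def by blast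
    then have "c = ax ! sg i j t" using assms by (simp add: nth_revseg)
    moreover have "lo \<le> sg i j t \<and> sg i j t \<le> hi" using assms t unfolding sg_def by auto
    ultimately show "c \<in> rng ax lo hi" unfolding rng_def by blast
  qed
  show "rng ax lo hi \<subseteq> rng (revseg i j ax) lo hi"
  proof
    fix c assume "c \<in> rng ax lo hi"
    then obtain t where t: "c = ax ! t" "lo \<le> t" "t \<le> hi" unfolding rng_def by blast
    have "sg i j t < length ax" using assms t sg_lt by auto
    then have "c = revseg i j ax ! sg i j t" using t by (simp add: nth_revseg)
    moreover have "lo \<le> sg i j t \<and> sg i j t \<le> hi" using assms t unfolding sg_def by auto
    ultimately show "c \<in> rng (revseg i j ax) lo hi" unfolding rng_def by blast
  qed
qed

lemma rng_revseg_in: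
  assumes "i \<le> lo" "hi \<le> j" "j < length ax" "lo \<le> hi"
  shows "rng (revseg i j ax) lo hi = rng ax (i + j - hi) (i + j - lo)"
proof
  show "rng (revseg i j ax) lo hi \<subseteq> rng ax (i + j - hi) (i + j - lo)"
  proof
    fix c assume "c \<in> rng (revseg i j ax) lo hi"
    then obtain t where t: "c = revseg i j ax ! t" "lo \<le> t" "t \<le> hi" unfolding rng_def by blast
    then have c1: "c = ax ! sg i j t" using assms by (simp add: nth_revseg)
    have "sg i j t = i + j - t" using assms t unfolding sg_def by auto
    then have c2: "c = ax ! (i + j - t)" using c1 by simp
    have "i + j - hi \<le> i + j - t \<and> i + j - t \<le> i + j - lo" using assms t by auto
    with c2 show "c \<in> rng ax (i + j - hi) (i + j - lo)" unfolding rng_def by blast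
  qed
  show "rng ax (i + j - hi) (i + j - lo) \<subseteq> rng (revseg i j ax) lo hi"
  proof
    fix c assume "c \<in> rng ax (i + j - hi) (i + j - lo)"
    then obtain t where t: "c = ax ! t" "i + j - hi \<le> t" "t \<le> i + j - lo" unfolding rng_def by blast
    have s: "sg i j t = i + j - t" using assms t unfolding sg_def by auto
    have "sg i j t < length ax" using assms t s by auto
    then have "c = revseg i j ax ! sg i j t" using t by (simp add: nth_revseg)
    moreover have "lo \<le> sg i j t \<and> sg i j t \<le> hi" using assms t s by auto
    ultimately show "c \<in> rng (revseg i j ax) lo hi" unfolding rng_def by blast
  qed
qed

lemma aux3: "b = Suc a \<or> a = Suc (b::nat) \<Longrightarrow> c = Suc b \<or> b = Suc c \<Longrightarrow> c \<noteq> a \<Longrightarrow> (c = Suc b \<longleftrightarrow> b = Suc a)"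
  by (elim disjE) auto

lemma path_dir:
  fixes q :: "nat \<Rightarrow> nat"
  assumes st: "\<forall>t. lo \<le> t \<and> t < hi \<longrightarrow> q (Suc t) = Suc (q t) \<or> q t = Suc (q (Suc t))"
    and inj: "inj_on q {lo..hi}"
  shows "\<forall>k. lo + Suc k \<le> hi \<longrightarrow> (q (Suc (lo + k)) = Suc (q (lo + k)) \<longleftrightarrow> q (Suc lo) = Suc (q lo))"
proof (intro allI)
  fix k show "lo + Suc k \<le> hi \<longrightarrow> (q (Suc (lo + k)) = Suc (q (lo + k)) \<longleftrightarrow> q (Suc lo) = Suc (q lo))"
  proof (induction k)
    case 0 then show ?case by simp
  next
    case (Suc k)
    show ?case
    proof
      assume h: "lo + Suc (Suc k) \<le> hi"
      let ?t = "lo + k"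
      have s1: "q (Suc ?t) = Suc (q ?t) \<or> q ?t = Suc (q (Suc ?t))" using st[rule_format, of ?t] h by simp
      have s2: "q (Suc (Suc ?t)) = Suc (q (Suc ?t)) \<or> q (Suc ?t) = Suc (q (Suc (Suc ?t)))" using st[rule_format, of "Suc ?t"] h by simp
      have ne: "q (Suc (Suc ?t)) \<noteq> q ?t"
      proof
        assume "q (Suc (Suc ?t)) = q ?t"
        moreover have "Suc (Suc ?t) \<in> {lo..hi}" "?t \<in> {lo..hi}" using h by auto
        ultimately have "Suc (Suc ?t) = ?t" using inj_onD[OF inj] by blast
        then show False by simp
      qed
      have "q (Suc (Suc ?t)) = Suc (q (Suc ?t)) \<longleftrightarrow> q (Suc ?t) = Suc (q ?t)" using aux3[OF s1 s2 ne] .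
      moreover have "q (Suc (lo + k)) = Suc (q (lo + k)) \<longleftrightarrow> q (Suc lo) = Suc (q lo)"
        using Suc.IH h by simp
      ultimately show "q (Suc (lo + Suc k)) = Suc (q (lo + Suc k)) \<longleftrightarrow> q (Suc lo) = Suc (q lo)"
        by simp
    qed
  qed
qed

lemma path_lemma:
  fixes q :: "nat \<Rightarrow> nat"
  assumes st: "\<forall>t. lo \<le> t \<and> t < hi \<longrightarrow> q (Suc t) = Suc (q t) \<or> q t = Suc (q (Suc t))"
    and inj: "inj_on q {lo..hi}"
  shows "(\<forall>k. lo + k \<le> hi \<longrightarrow> q (lo + k) = q lo + k) \<or> (\<forall>k. lo + k \<le> hi \<longrightarrow> q (lo + k) + k = q lo)"
proof (cases "lo < hi")
  case False
  then have "\<forall>k. lo + k \<le> hi \<longrightarrow> k = 0" by auto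
  then show ?thesis by auto
next
  case True
  note d = path_dir[OF st inj]
  show ?thesis
  proof (cases "q (Suc lo) = Suc (q lo)")
    case up: True
    have "\<forall>k. lo + k \<le> hi \<longrightarrow> q (lo + k) = q lo + k"
    proof
      fix k show "lo + k \<le> hi \<longrightarrow> q (lo + k) = q lo + k"
      proof (induction k)
        case 0 then show ?case by simp
      next
        case (Suc k)
        show ?case
        proof
          assume h: "lo + Suc k \<le> hi"
          have "q (Suc (lo + k)) = Suc (q (lo + k))" using d[rule_format, of k] h up by simp
          then show "q (lo + Suc k) = q lo + Suc k" using Suc h by simp
        qed
      qed
    qed
    then show ?thesis by blast
  next
    case dn: False
    then have dn': "q lo = Suc (q (Suc lo))" using st[rule_format, of lo] True by simp
    have "\<forall>k. lo + k \<le> hi \<longrightarrow> q (lo + k) + k = q lo"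
    proof
      fix k show "lo + k \<le> hi \<longrightarrow> q (lo + k) + k = q lo"
      proof (induction k)
        case 0 then show ?case by simp
      next
        case (Suc k)
        show ?case
        proof
          assume h: "lo + Suc k \<le> hi"
          have "q (Suc (lo + k)) \<noteq> Suc (q (lo + k))" using d[rule_format, of k] h dn by simp
          moreover have "lo \<le> lo + k \<and> lo + k < hi" using h by simp
          ultimately have "q (lo + k) = Suc (q (Suc (lo + k)))" using st by blast
          then show "q (lo + Suc k) + Suc k = q lo" using Suc h by simp
        qed
      qed
    qed
    then show ?thesis by blast
  qed
qed



lemma arith_bd:
  fixes a b d1 d2 lo hi :: nat
  assumes "a \<noteq> b" "lo = min a b" "hi = max a b"
    and "P1 \<longrightarrow> Suc d1 = lo \<or> d1 = Suc hi"
    and "P2 \<longrightarrow> Suc d2 = lo \<or> d2 = Suc hi"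
    and "P1 \<and> P2 \<longrightarrow> d1 \<noteq> d2"
  shows "((P1 \<longrightarrow> d1 = Suc a \<or> a = Suc d1) \<and> (P2 \<longrightarrow> b = Suc d2 \<or> d2 = Suc b))
       \<or> ((P1 \<longrightarrow> d1 = Suc b \<or> b = Suc d1) \<and> (P2 \<longrightarrow> a = Suc d2 \<or> d2 = Suc a))"
  using assms by (cases "a < b"; cases P1; cases P2) (auto simp: min_def max_def)

lemma adj_sym: "adj ax u v = adj ax v u" unfolding adj_def by auto

lemma adj_chain_eq:
  fixes ax ax' :: "'c::finite list"
  assumes ax: "is_axis ax" and ax': "is_axis ax'"
    and ch: "\<forall>t. Suc t < card (UNIV::'c set) \<longrightarrow> adj ax (ax' ! t) (ax' ! Suc t)"
  shows "ax = ax' \<or> ax = rev ax'"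
proof -
  define m where "m = card (UNIV::'c set)"
  have la: "length ax = m" and la': "length ax' = m" using axis_len ax ax' m_def by auto
  have m0: "m > 0" using card_pos m_def by auto
  define q where "q t = pos ax (ax' ! t)" for t
  have qb: "\<And>t. q t < m" unfolding q_def using pos_props[OF ax] la by auto
  have qax: "\<And>t. t < m \<Longrightarrow> ax ! q t = ax' ! t" unfolding q_def using pos_props[OF ax] by auto
  have st: "\<forall>t. 0 \<le> t \<and> t < m - 1 \<longrightarrow> q (Suc t) = Suc (q t) \<or> q t = Suc (q (Suc t))"
  proof (intro allI impI)
    fix t assume "0 \<le> t \<and> t < m - 1"
    then have "Suc t < card (UNIV::'c set)" using m_def by simp
    then have "adj ax (ax' ! t) (ax' ! Suc t)" using ch by blast
    then show "q (Suc t) = Suc (q t) \<or> q t = Suc (q (Suc t))" unfolding adj_def q_def by auto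
  qed
  have inj: "inj_on q {0..m - 1}"
  proof (rule inj_onI)
    fix a b assume "a \<in> {0..m - 1}" "b \<in> {0..m - 1}" "q a = q b"
    then have "ax' ! a = ax' ! b" unfolding q_def using pos_inj[OF ax] by blast
    moreover have "a < length ax'" "b < length ax'" using \<open>a \<in> _\<close> \<open>b \<in> _\<close> la' m0 by auto
    ultimately show "a = b" using ax' unfolding is_axis_def by (simp add: nth_eq_iff_index_eq)
  qed
  from path_lemma[OF st inj]
  consider (up) "\<forall>k. 0 + k \<le> m - 1 \<longrightarrow> q (0 + k) = q 0 + k"
    | (dn) "\<forall>k. 0 + k \<le> m - 1 \<longrightarrow> q (0 + k) + k = q 0" by blast
  then show ?thesis
  proof cases
    case up
    have "q (0 + (m - 1)) = q 0 + (m - 1)" using up[rule_format, of "m - 1"] by linarith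
    then have "q 0 = 0" using qb[of "m - 1"] m0 by simp
    have qk: "\<And>t. t < m \<Longrightarrow> q t = t"
    proof -
      fix t assume "t < m"
      then have "q (0 + t) = q 0 + t" using up[rule_format, of t] by linarith
      then show "q t = t" using \<open>q 0 = 0\<close> by simp
    qed
    have "ax = ax'"
    proof (rule nth_equalityI)
      show "length ax = length ax'" using la la' by simp
      fix t assume "t < length ax"
      then have t: "t < m" using la by simp
      have "ax ! t = ax ! q t" using qk[OF t] by simp
      also have "\<dots> = ax' ! t" using qax t by simp
      finally show "ax ! t = ax' ! t" .
    qed
    then show ?thesis by blast
  next
    case dn
    have "q (0 + (m - 1)) + (m - 1) = q 0" using dn[rule_format, of "m - 1"] by linarith
    then have q0: "q 0 = m - 1" using qb[of 0] by simp
    have qk: "\<And>t. t < m \<Longrightarrow> q (m - 1 - t) = t"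
    proof -
      fix t assume "t < m"
      then have "q (0 + (m - 1 - t)) + (m - 1 - t) = q 0" using dn[rule_format, of "m - 1 - t"] by linarith
      then have "q (m - 1 - t) + (m - 1 - t) = m - 1" using q0 by simp
      then show "q (m - 1 - t) = t" using \<open>t < m\<close> by linarith
    qed
    have "ax = rev ax'"
    proof (rule nth_equalityI)
      show "length ax = length (rev ax')" using la la' by simp
      fix t assume "t < length ax"
      then have t: "t < m" using la by simp
      have "ax ! t = ax ! q (m - 1 - t)" using qk[OF t] by simp
      also have "\<dots> = ax' ! (m - 1 - t)" using qax t by simp
      also have "\<dots> = rev ax' ! t" using t la' by (simp add: rev_nth)
      finally show "ax ! t = rev ax' ! t" .
    qed
    then show ?thesis by blast
  qed
qed

lemma next_to_block:
  assumes ax: "is_axis ax" and S: "S = rng ax L R" and R: "R < length ax" and LR: "L \<le> R"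
    and d: "d \<notin> S" and iv: "is_interval (insert d S) ax"
  shows "Suc (pos ax d) = L \<or> pos ax d = Suc R"
proof -
  have inS: "\<And>t. L \<le> t \<Longrightarrow> t \<le> R \<Longrightarrow> ax ! t \<in> S" using S unfolding rng_def by blast
  have posS: "\<And>e. e \<in> S \<Longrightarrow> L \<le> pos ax e \<and> pos ax e \<le> R"
  proof -
    fix e assume "e \<in> S"
    then obtain t where "e = ax ! t" "L \<le> t" "t \<le> R" using S unfolding rng_def by blast
    then show "L \<le> pos ax e \<and> pos ax e \<le> R" using pos_nth[OF ax, of t] R by simp
  qed
  have pd: "pos ax d < length ax" "ax ! pos ax d = d" using pos_props[OF ax] by auto
  have "\<not> (L \<le> pos ax d \<and> pos ax d \<le> R)" using inS[of "pos ax d"] pd d by auto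
  then consider "pos ax d < L" | "R < pos ax d" by linarith
  then show ?thesis
  proof cases
    case 1
    show ?thesis
    proof (rule ccontr)
      assume "\<not> ?thesis"
      then have lt: "Suc (pos ax d) < L" using 1 by simp
      have bS: "ax ! L \<in> S" using inS LR by simp
      have pL: "pos ax (ax ! L) = L" using pos_nth[OF ax] R LR by simp
      have "ax ! Suc (pos ax d) \<in> insert d S"
        using iv unfolding interval_pos[OF ax] using bS lt pL by (metis insertCI lessI)
      moreover have ps: "pos ax (ax ! Suc (pos ax d)) = Suc (pos ax d)" using pos_nth[OF ax] lt R LR by simp
      ultimately consider "ax ! Suc (pos ax d) = d" | "ax ! Suc (pos ax d) \<in> S" by blast
      then show False
      proof cases
        case 1 then show False using ps by simp
      next
        case 2 then show False using ps posS[OF 2] lt by simp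
      qed
    qed
  next
    case 2
    show ?thesis
    proof (rule ccontr)
      assume "\<not> ?thesis"
      then have lt: "Suc R < pos ax d" using 2 by simp
      have bS: "ax ! R \<in> S" using inS LR by simp
      have pL: "pos ax (ax ! R) = R" using pos_nth[OF ax] R by simp
      have "ax ! Suc R \<in> insert d S"
        using iv unfolding interval_pos[OF ax] using bS lt pL by (metis insertCI lessI)
      moreover have ps: "pos ax (ax ! Suc R) = Suc R" using pos_nth[OF ax] lt pd by simp
      ultimately consider "ax ! Suc R = d" | "ax ! Suc R \<in> S" by blast
      then show False
      proof cases
        case 1 then show False using ps lt by simp
      next
        case 2 then show False using ps posS[OF 2] by simp
      qed
    qed
  qed
qed



lemma rng_pair: "rng ax t (Suc t) = {ax ! t, ax ! Suc t}"
  unfolding rng_def by (auto simp: le_Suc_eq)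

lemma rng_lo: "lo \<le> hi \<Longrightarrow> rng ax lo hi = insert (ax ! lo) (rng ax (Suc lo) hi)"
proof
  show "lo \<le> hi \<Longrightarrow> rng ax lo hi \<subseteq> insert (ax ! lo) (rng ax (Suc lo) hi)"
  proof
    fix c assume "c \<in> rng ax lo hi"
    then obtain t where t: "c = ax ! t" "lo \<le> t" "t \<le> hi" unfolding rng_def by blast
    show "c \<in> insert (ax ! lo) (rng ax (Suc lo) hi)"
    proof (cases "t = lo")
      case True then show ?thesis using t by simp
    next
      case False then have "Suc lo \<le> t" using t by simp
      then show ?thesis using t unfolding rng_def by blast
    qed
  qed
  show "lo \<le> hi \<Longrightarrow> insert (ax ! lo) (rng ax (Suc lo) hi) \<subseteq> rng ax lo hi"
    unfolding rng_def by fastforce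
qed

lemma rng_hi: "lo \<le> Suc hi \<Longrightarrow> rng ax lo (Suc hi) = insert (ax ! Suc hi) (rng ax lo hi)"
proof
  show "lo \<le> Suc hi \<Longrightarrow> rng ax lo (Suc hi) \<subseteq> insert (ax ! Suc hi) (rng ax lo hi)"
  proof
    fix c assume "c \<in> rng ax lo (Suc hi)"
    then obtain t where t: "c = ax ! t" "lo \<le> t" "t \<le> Suc hi" unfolding rng_def by blast
    show "c \<in> insert (ax ! Suc hi) (rng ax lo hi)"
    proof (cases "t = Suc hi")
      case True then show ?thesis using t by simp
    next
      case False then have "t \<le> hi" using t by simp
      then show ?thesis using t unfolding rng_def by blast
    qed
  qed
  show "lo \<le> Suc hi \<Longrightarrow> insert (ax ! Suc hi) (rng ax lo hi) \<subseteq> rng ax lo (Suc hi)"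
    unfolding rng_def by fastforce
qed

lemma FL:
  fixes ax1 ax :: "'c::finite list"
  assumes ax1: "is_axis ax1" and ij: "i < j" "j < card (UNIV::'c set)" and ax: "is_axis ax"
    and ci: "\<And>S. S \<noteq> {} \<Longrightarrow> is_interval S ax1 \<Longrightarrow> is_interval S (revseg i j ax1) \<Longrightarrow> is_interval S ax"
  shows "ax = ax1 \<or> ax = rev ax1 \<or> ax = revseg i j ax1 \<or> ax = rev (revseg i j ax1)"
proof -
  define m where "m = card (UNIV::'c set)"
  define ax2 where "ax2 = revseg i j ax1"
  have l1: "length ax1 = m" using axis_len[OF ax1] m_def by simp
  have l2: "length ax2 = m" using l1 ax2_def by simp
  have la: "length ax = m" using axis_len[OF ax] m_def by simp
  have jm: "j < m" using ij m_def by simp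
  have ax2: "is_axis ax2" unfolding ax2_def using revseg_axis[OF ax1] jm l1 by simp
  have nth2: "\<And>t. t < m \<Longrightarrow> ax2 ! t = ax1 ! sg i j t" unfolding ax2_def using l1 by (simp add: nth_revseg)
  have dist1: "\<And>a b. a < m \<Longrightarrow> b < m \<Longrightarrow> ax1 ! a = ax1 ! b \<Longrightarrow> a = b"
    using ax1 l1 unfolding is_axis_def by (simp add: nth_eq_iff_index_eq)
  have cr: "\<And>lo hi. hi < m \<Longrightarrow> lo \<le> hi \<Longrightarrow> (hi < i \<or> j < lo \<or> (lo \<le> i \<and> j \<le> hi)) \<Longrightarrow> is_interval (rng ax1 lo hi) ax"
  proof -
    fix lo hi assume h: "hi < m" "lo \<le> hi" "hi < i \<or> j < lo \<or> (lo \<le> i \<and> j \<le> hi)"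
    have "rng ax2 lo hi = rng ax1 lo hi" unfolding ax2_def by (rule rng_revseg_out) (use h l1 jm in auto)
    moreover have "is_interval (rng ax2 lo hi) ax2" using rng_interval[OF ax2] h l2 by simp
    moreover have "is_interval (rng ax1 lo hi) ax1" using rng_interval[OF ax1] h l1 by simp
    moreover have "rng ax1 lo hi \<noteq> {}" using h unfolding rng_def by auto
    ultimately show "is_interval (rng ax1 lo hi) ax" using ci ax2_def by metis
  qed
  have cr_in: "\<And>lo hi. i \<le> lo \<Longrightarrow> hi \<le> j \<Longrightarrow> lo \<le> hi \<Longrightarrow> is_interval (rng ax1 lo hi) ax"
  proof -
    fix lo hi assume h: "i \<le> lo" "hi \<le> j" "lo \<le> hi"
    have "rng ax2 (i + j - hi) (i + j - lo) = rng ax1 (i + j - (i + j - lo)) (i + j - (i + j - hi))"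
      unfolding ax2_def using h l1 jm by (intro rng_revseg_in) auto
    also have "\<dots> = rng ax1 lo hi" using h by (simp add: diff_diff_cancel)
    finally have e: "rng ax2 (i + j - hi) (i + j - lo) = rng ax1 lo hi" .
    have "is_interval (rng ax2 (i + j - hi) (i + j - lo)) ax2" using rng_interval[OF ax2] h l2 jm by simp
    moreover have "is_interval (rng ax1 lo hi) ax1" using rng_interval[OF ax1] h l1 jm by simp
    moreover have "rng ax1 lo hi \<noteq> {}" using h unfolding rng_def by auto
    ultimately show "is_interval (rng ax1 lo hi) ax" using ci e ax2_def by metis
  qed
  have adjp: "\<And>t. Suc t < m \<Longrightarrow> is_interval (rng ax1 t (Suc t)) ax \<Longrightarrow> adj ax (ax1 ! t) (ax1 ! Suc t)"
  proof -
    fix t assume h: "Suc t < m" "is_interval (rng ax1 t (Suc t)) ax"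
    have "ax1 ! t \<noteq> ax1 ! Suc t" using dist1[of t "Suc t"] h by auto
    then show "adj ax (ax1 ! t) (ax1 ! Suc t)" using interval_adj[OF ax] h rng_pair by metis
  qed
  have adjS2: "\<And>t. i \<le> t \<Longrightarrow> t < j \<Longrightarrow> adj ax (ax1 ! t) (ax1 ! Suc t)"
    using adjp cr_in jm by simp
  have adjOut: "\<And>t. Suc t < m \<Longrightarrow> Suc t < i \<or> j < t \<Longrightarrow> adj ax (ax1 ! t) (ax1 ! Suc t)"
    using adjp cr by (metis Suc_leD le_refl)
  define q where "q t = pos ax (ax1 ! t)" for t
  have qb: "\<And>t. q t < m" unfolding q_def using pos_props[OF ax] la by auto
  have qax: "\<And>t. t < m \<Longrightarrow> ax ! q t = ax1 ! t" unfolding q_def using pos_props[OF ax] by auto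
  have qinj: "\<And>a b. a < m \<Longrightarrow> b < m \<Longrightarrow> q a = q b \<Longrightarrow> a = b"
    unfolding q_def using pos_inj[OF ax] dist1 by metis
  have st: "\<forall>t. i \<le> t \<and> t < j \<longrightarrow> q (Suc t) = Suc (q t) \<or> q t = Suc (q (Suc t))"
  proof (intro allI impI)
    fix t assume "i \<le> t \<and> t < j"
    then have "adj ax (ax1 ! t) (ax1 ! Suc t)" using adjS2 by blast
    then show "q (Suc t) = Suc (q t) \<or> q t = Suc (q (Suc t))" unfolding adj_def q_def by auto
  qed
  have inj: "inj_on q {i..j}"
    by (rule inj_onI) (use qinj jm in auto)
  define lo2 where "lo2 = min (q i) (q j)"
  define hi2 where "hi2 = max (q i) (q j)"
  have qij: "q i \<noteq> q j"
  proof
    assume "q i = q j"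
    then have "i = j" using qinj[of i j] ij jm by simp
    then show False using ij by simp
  qed
  have cov: "(\<forall>t. i \<le> t \<and> t \<le> j \<longrightarrow> lo2 \<le> q t \<and> q t \<le> hi2) \<and>
             (\<forall>s. lo2 \<le> s \<and> s \<le> hi2 \<longrightarrow> (\<exists>t. i \<le> t \<and> t \<le> j \<and> q t = s))"
  proof -
    from path_lemma[OF st inj]
    consider (up) "\<forall>k. i + k \<le> j \<longrightarrow> q (i + k) = q i + k"
      | (dn) "\<forall>k. i + k \<le> j \<longrightarrow> q (i + k) + k = q i" by blast
    then show ?thesis
    proof cases
      case up
      have qj: "q j = q i + (j - i)" using up[rule_format, of "j - i"] ij by simp
      have qt: "\<And>t. i \<le> t \<Longrightarrow> t \<le> j \<Longrightarrow> q t = q i + (t - i)"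
      proof -
        fix t assume "i \<le> t" "t \<le> j"
        then show "q t = q i + (t - i)" using up[rule_format, of "t - i"] by simp
      qed
      have lh: "lo2 = q i" "hi2 = q i + (j - i)" unfolding lo2_def hi2_def using qj by auto
      show ?thesis
      proof (rule conjI; intro allI impI)
        fix t assume tt: "i \<le> t \<and> t \<le> j"
        then have "q t = q i + (t - i)" using qt by blast
        then show "lo2 \<le> q t \<and> q t \<le> hi2" using lh tt by linarith
      next
        fix s assume s: "lo2 \<le> s \<and> s \<le> hi2"
        have r: "i \<le> i + (s - q i)" "i + (s - q i) \<le> j" using s lh ij by linarith+
        have "q (i + (s - q i)) = q i + (i + (s - q i) - i)" using qt[OF r] .
        then have "q (i + (s - q i)) = s" using s lh by linarith
        then show "\<exists>t. i \<le> t \<and> t \<le> j \<and> q t = s" using r by blast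
      qed
    next
      case dn
      have qj: "q j + (j - i) = q i" using dn[rule_format, of "j - i"] ij by simp
      have qt: "\<And>t. i \<le> t \<Longrightarrow> t \<le> j \<Longrightarrow> q t + (t - i) = q i"
      proof -
        fix t assume "i \<le> t" "t \<le> j"
        then show "q t + (t - i) = q i" using dn[rule_format, of "t - i"] by simp
      qed
      have lh: "lo2 = q j" "hi2 = q i" unfolding lo2_def hi2_def using qj by auto
      show ?thesis
      proof (rule conjI; intro allI impI)
        fix t assume tt: "i \<le> t \<and> t \<le> j"
        then have "q t + (t - i) = q i" using qt by blast
        then show "lo2 \<le> q t \<and> q t \<le> hi2" using lh tt qj by linarith
      next
        fix s assume s: "lo2 \<le> s \<and> s \<le> hi2"
        have r: "i \<le> i + (q i - s)" "i + (q i - s) \<le> j" using s lh qj ij by linarith+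
        have "q (i + (q i - s)) + (i + (q i - s) - i) = q i" using qt[OF r] .
        then have "q (i + (q i - s)) = s" using s lh by linarith
        then show "\<exists>t. i \<le> t \<and> t \<le> j \<and> q t = s" using r by blast
      qed
    qed
  qed
  have hi2m: "hi2 < length ax" using qb la unfolding hi2_def by (simp add: max_def)
  have lohi: "lo2 \<le> hi2" unfolding lo2_def hi2_def by simp
  have S2: "rng ax1 i j = rng ax lo2 hi2"
  proof
    show "rng ax1 i j \<subseteq> rng ax lo2 hi2"
    proof
      fix c assume "c \<in> rng ax1 i j"
      then obtain t where t: "c = ax1 ! t" "i \<le> t" "t \<le> j" unfolding rng_def by blast
      then have "c = ax ! q t" using qax jm by simp
      moreover have "lo2 \<le> q t \<and> q t \<le> hi2" using cov t by blast
      ultimately show "c \<in> rng ax lo2 hi2" unfolding rng_def by blast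
    qed
    show "rng ax lo2 hi2 \<subseteq> rng ax1 i j"
    proof
      fix c assume "c \<in> rng ax lo2 hi2"
      then obtain s where s: "c = ax ! s" "lo2 \<le> s" "s \<le> hi2" unfolding rng_def by blast
      then obtain t where t: "i \<le> t" "t \<le> j" "q t = s" using cov by blast
      then have "c = ax1 ! t" using s qax jm by (metis le_less_trans)
      then show "c \<in> rng ax1 i j" using t unfolding rng_def by blast
    qed
  qed
  have B1: "0 < i \<longrightarrow> Suc (q (i - 1)) = lo2 \<or> q (i - 1) = Suc hi2"
  proof
    assume i0: "0 < i"
    have "ax1 ! (i - 1) \<notin> rng ax1 lo2 hi2 \<or> True" by simp
    have nin: "ax1 ! (i - 1) \<notin> rng ax lo2 hi2"
    proof
      assume "ax1 ! (i - 1) \<in> rng ax lo2 hi2"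
      then obtain t where "ax1 ! (i - 1) = ax1 ! t" "i \<le> t" "t \<le> j" using S2 unfolding rng_def by auto
      moreover have "t < m" using calculation jm by simp
      moreover have "i - 1 < m" using jm ij by simp
      ultimately have "i - 1 = t" using dist1 by blast
      then show False using \<open>i \<le> t\<close> i0 by simp
    qed
    have "rng ax1 (i - 1) j = insert (ax1 ! (i - 1)) (rng ax1 (Suc (i - 1)) j)"
      using ij by (intro rng_lo) simp
    then have "insert (ax1 ! (i - 1)) (rng ax1 i j) = rng ax1 (i - 1) j" using i0 by simp
    then have iv: "is_interval (insert (ax1 ! (i - 1)) (rng ax lo2 hi2)) ax"
      using cr[of j "i - 1"] jm ij S2 by simp
    from next_to_block[OF ax refl hi2m lohi nin iv]
    show "Suc (q (i - 1)) = lo2 \<or> q (i - 1) = Suc hi2" unfolding q_def .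
  qed
  have B2: "Suc j < m \<longrightarrow> Suc (q (Suc j)) = lo2 \<or> q (Suc j) = Suc hi2"
  proof
    assume jm1: "Suc j < m"
    have nin: "ax1 ! (Suc j) \<notin> rng ax lo2 hi2"
    proof
      assume "ax1 ! (Suc j) \<in> rng ax lo2 hi2"
      then obtain t where "ax1 ! (Suc j) = ax1 ! t" "i \<le> t" "t \<le> j" using S2 unfolding rng_def by auto
      moreover have "t < m" using calculation jm by simp
      ultimately have "Suc j = t" using dist1 jm1 by blast
      then show False using \<open>t \<le> j\<close> by simp
    qed
    have "insert (ax1 ! (Suc j)) (rng ax1 i j) = rng ax1 i (Suc j)"
      using ij rng_hi[of i j ax1] by simp
    then have iv: "is_interval (insert (ax1 ! (Suc j)) (rng ax lo2 hi2)) ax"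
      using cr[of "Suc j" i] jm1 ij S2 by simp
    from next_to_block[OF ax refl hi2m lohi nin iv]
    show "Suc (q (Suc j)) = lo2 \<or> q (Suc j) = Suc hi2" unfolding q_def .
  qed
  have B3: "0 < i \<and> Suc j < m \<longrightarrow> q (i - 1) \<noteq> q (Suc j)"
  proof (intro impI notI)
    assume "0 < i \<and> Suc j < m" "q (i - 1) = q (Suc j)"
    moreover have "i - 1 < m" using jm ij by simp
    ultimately have "i - 1 = Suc j" using qinj[of "i - 1" "Suc j"] by blast
    then show False using ij by simp
  qed
  from arith_bd[OF qij lo2_def hi2_def B1 B2 B3]
  have BB: "((0 < i \<longrightarrow> adj ax (ax1 ! (i - 1)) (ax1 ! i)) \<and> (Suc j < m \<longrightarrow> adj ax (ax1 ! j) (ax1 ! Suc j)))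
       \<or> ((0 < i \<longrightarrow> adj ax (ax1 ! (i - 1)) (ax1 ! j)) \<and> (Suc j < m \<longrightarrow> adj ax (ax1 ! i) (ax1 ! Suc j)))"
    unfolding adj_def q_def by auto
  then show ?thesis
  proof
    assume b: "(0 < i \<longrightarrow> adj ax (ax1 ! (i - 1)) (ax1 ! i)) \<and> (Suc j < m \<longrightarrow> adj ax (ax1 ! j) (ax1 ! Suc j))"
    have "\<forall>t. Suc t < card (UNIV::'c set) \<longrightarrow> adj ax (ax1 ! t) (ax1 ! Suc t)"
    proof (intro allI impI)
      fix t assume "Suc t < card (UNIV::'c set)"
      then have t: "Suc t < m" using m_def by simp
      consider "Suc t < i \<or> j < t" | "Suc t = i" | "i \<le> t \<and> t < j" | "t = j" by linarith
      then show "adj ax (ax1 ! t) (ax1 ! Suc t)"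
      proof cases
        case 1 then show ?thesis using adjOut t by blast
      next
        case 2 then show ?thesis using b by auto
      next
        case 3 then show ?thesis using adjS2 by blast
      next
        case 4 then show ?thesis using b t by auto
      qed
    qed
    then show ?thesis using adj_chain_eq[OF ax ax1] by blast
  next
    assume b: "(0 < i \<longrightarrow> adj ax (ax1 ! (i - 1)) (ax1 ! j)) \<and> (Suc j < m \<longrightarrow> adj ax (ax1 ! i) (ax1 ! Suc j))"
    have "\<forall>t. Suc t < card (UNIV::'c set) \<longrightarrow> adj ax (ax2 ! t) (ax2 ! Suc t)"
    proof (intro allI impI)
      fix t assume "Suc t < card (UNIV::'c set)"
      then have t: "Suc t < m" using m_def by simp
      have n1: "ax2 ! t = ax1 ! sg i j t" "ax2 ! Suc t = ax1 ! sg i j (Suc t)" using nth2 t by auto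
      consider "Suc t < i \<or> j < t" | "Suc t = i" | "i \<le> t \<and> t < j" | "t = j" by linarith
      then show "adj ax (ax2 ! t) (ax2 ! Suc t)"
      proof cases
        case 1
        then have "sg i j t = t" "sg i j (Suc t) = Suc t" unfolding sg_def by auto
        then show ?thesis using adjOut t 1 n1 by simp
      next
        case 2
        then have "sg i j t = i - 1" "sg i j (Suc t) = j" unfolding sg_def using ij by auto
        then show ?thesis using b n1 2 by auto
      next
        case 3
        define s where "s = i + j - Suc t"
        have "sg i j t = Suc s" "sg i j (Suc t) = s" unfolding sg_def s_def using 3 by auto
        moreover have "i \<le> s" "s < j" using 3 s_def by linarith+
        moreover note adjS2[OF calculation(3) calculation(4)]
        ultimately show ?thesis using n1 adj_sym by metis
      next
        case 4
        then have "sg i j t = i" "sg i j (Suc t) = Suc j" unfolding sg_def using ij by auto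
        then show ?thesis using b n1 4 t by auto
      qed
    qed
    then have "ax = ax2 \<or> ax = rev ax2" using adj_chain_eq[OF ax ax2] by blast
    then show ?thesis unfolding ax2_def by blast
  qed
qed



lemma axis_le_pos: assumes "is_axis ax" shows "axis_le ax a b \<longleftrightarrow> pos ax a \<le> pos ax b"
proof
  assume "axis_le ax a b" then show "pos ax a \<le> pos ax b"
    unfolding axis_le_def axis_less_pos[OF assms] by auto
next
  assume h: "pos ax a \<le> pos ax b"
  show "axis_le ax a b"
  proof (cases "pos ax a = pos ax b")
    case True then show ?thesis using pos_inj[OF assms] unfolding axis_le_def by blast
  next
    case False then show ?thesis using h unfolding axis_le_def axis_less_pos[OF assms] by simp
  qed
qed

lemma hull_interval: assumes ax: "is_axis ax" shows "is_interval (interval_hull ax A) ax"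
  unfolding is_interval_def
proof (intro ballI allI impI)
  fix a b c assume a: "a \<in> interval_hull ax A" and b: "b \<in> interval_hull ax A"
    and c: "axis_less ax a c \<and> axis_less ax c b"
  obtain y1 z1 where 1: "y1 \<in> A" "z1 \<in> A" "axis_le ax y1 a" "axis_le ax a z1"
    using a unfolding interval_hull_def by blast
  obtain y2 z2 where 2: "y2 \<in> A" "z2 \<in> A" "axis_le ax y2 b" "axis_le ax b z2"
    using b unfolding interval_hull_def by blast
  have "pos ax a < pos ax c" "pos ax c < pos ax b" using c axis_less_pos[OF ax] by auto
  moreover have "pos ax y1 \<le> pos ax a" using 1(3) axis_le_pos[OF ax] by blast
  moreover have "pos ax b \<le> pos ax z2" using 2(4) axis_le_pos[OF ax] by blast
  ultimately have "pos ax y1 \<le> pos ax c" "pos ax c \<le> pos ax z2" by linarith+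
  then have "axis_le ax y1 c" "axis_le ax c z2" using axis_le_pos[OF ax] by blast+
  then show "c \<in> interval_hull ax A" unfolding interval_hull_def using 1 2 by blast
qed

lemma sub_hull: assumes "is_axis ax" shows "A \<subseteq> interval_hull ax A"
proof
  fix x assume "x \<in> A"
  moreover have "axis_le ax x x" unfolding axis_le_def by simp
  ultimately show "x \<in> interval_hull ax A" unfolding interval_hull_def by blast
qed

lemma sum_rep: "(\<Sum>S\<leftarrow>replicate k A. (c S :: real)) = real k * c A"
  by (simp add: sum_list_replicate)

lemma sum_concat_rep: "(\<Sum>S\<leftarrow>concat (replicate N Q). (c S :: real)) = real N * (\<Sum>S\<leftarrow>Q. c S)"
  by (induction N) (auto simp: algebra_simps)

lemma exN:
  fixes M :: real
  assumes "finite S"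
  shows "\<exists>N::nat. \<forall>w\<in>S. w > 0 \<longrightarrow> M \<le> real N * w"
  using assms
proof (induction S rule: finite_induct)
  case empty then show ?case by simp
next
  case (insert w S)
  then obtain N where N: "\<forall>w\<in>S. w > 0 \<longrightarrow> M \<le> real N * w" by blast
  define N' where "N' = max N (nat \<lceil>M / w\<rceil>)"
  have "\<forall>v\<in>insert w S. v > 0 \<longrightarrow> M \<le> real N' * v"
  proof (intro ballI impI)
    fix v assume v: "v \<in> insert w S" "v > 0"
    show "M \<le> real N' * v"
    proof (cases "v = w")
      case True
      have "M / w \<le> of_int \<lceil>M / w\<rceil>" by (rule le_of_int_ceiling)
      also have "\<dots> \<le> real (nat \<lceil>M / w\<rceil>)" by (cases "\<lceil>M / w\<rceil> \<ge> 0") auto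
      also have "\<dots> \<le> real N'" unfolding N'_def by simp
      finally have "M / v \<le> real N'" using True by simp
      then show ?thesis using v by (simp add: divide_le_eq)
    next
      case False
      then have "M \<le> real N * v" using N v by auto
      also have "\<dots> \<le> real N' * v" using v unfolding N'_def by (intro mult_right_mono) auto
      finally show ?thesis .
    qed
  qed
  then show ?case by blast
qed

lemma finite_axes: "finite (axes :: 'c::finite list set)"
proof -
  have "axes \<subseteq> {xs :: 'c list. length xs = card (UNIV :: 'c set)}"
    unfolding axes_def using axis_len by blast
  then show ?thesis using finite_list_length finite_subset by blast
qed

lemma total_app: "total_cost c (xs @ ys) ax = total_cost c xs ax + total_cost c ys ax"
  unfolding total_cost_def by simp



lemma RL:
  fixes g :: "bool list \<Rightarrow> real"
    and f :: "'c::finite profile \<Rightarrow> 'c list set" and ax1 :: "'c list" and A :: "'c set"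
  assumes g_nonneg: "\<And>x. length x = card (UNIV :: 'c set) \<Longrightarrow> g x \<ge> 0"
    and g_zero: "\<And>x. length x = card (UNIV :: 'c set) \<Longrightarrow> (g x = 0 \<longleftrightarrow> contiguous_ones x)"
    and g_rev: "\<And>x. length x = card (UNIV :: 'c set) \<Longrightarrow> g x = g (rev x)"
    and f_scoring: "f = scoring_rule (\<lambda>A ax. g (approval_vector A ax))"
    and mono: "ballot_monotone f"
    and ax1: "is_axis ax1" and ij: "i < j" "j < card (UNIV :: 'c set)" and A: "A \<noteq> {}"
    and ny: "\<not> is_interval A (revseg i j ax1)"
    and hH: "is_interval (interval_hull (revseg i j ax1) A) ax1"
  shows "g (approval_vector A ax1) \<le> g (approval_vector A (revseg i j ax1))"
proof (rule ccontr)
  assume "\<not> ?thesis"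
  then have lt: "g (approval_vector A (revseg i j ax1)) < g (approval_vector A ax1)" by simp
  define m where "m = card (UNIV :: 'c set)"
  define ax2 where "ax2 = revseg i j ax1"
  define c :: "'c set \<Rightarrow> 'c list \<Rightarrow> real" where "c = (\<lambda>S ax. g (approval_vector S ax))"
  have l1: "length ax1 = m" using axis_len[OF ax1] m_def by simp
  have jm: "j < m" using ij m_def by simp
  have ax2: "is_axis ax2" unfolding ax2_def using revseg_axis[OF ax1] jm l1 by simp
  have l2: "length ax2 = m" using axis_len[OF ax2] m_def by simp
  have nth2: "\<And>t. t < m \<Longrightarrow> ax2 ! t = ax1 ! sg i j t" unfolding ax2_def using l1 by (simp add: nth_revseg)
  have dist1: "\<And>a b. a < m \<Longrightarrow> b < m \<Longrightarrow> ax1 ! a = ax1 ! b \<Longrightarrow> a = b"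
    using ax1 l1 unfolding is_axis_def by (simp add: nth_eq_iff_index_eq)
  have cnn: "\<And>S ax. is_axis ax \<Longrightarrow> c S ax \<ge> 0" unfolding c_def using g_nonneg axis_len len_av by metis
  have c0: "\<And>S ax. is_axis ax \<Longrightarrow> c S ax = 0 \<longleftrightarrow> is_interval S ax"
    unfolding c_def using g_zero axis_len contig_iff by (metis len_av)
  have crev: "\<And>S ax. is_axis ax \<Longrightarrow> c S (rev ax) = c S ax"
    unfolding c_def av_rev using g_rev axis_len by (metis len_av)
  define x where "x = approval_vector A ax1"
  define y where "y = approval_vector A ax2"
  have gx: "c A ax1 = g x" and gy: "c A ax2 = g y" unfolding c_def x_def y_def by auto
  have lt': "g y < g x" using lt unfolding x_def y_def ax2_def .
  have nd: "\<not> (i = 0 \<and> j = m - 1)"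
  proof
    assume "i = 0 \<and> j = m - 1"
    then have "ax2 = rev ax1" unfolding ax2_def using revseg_full[of ax1] l1 by simp
    then have "c A ax2 = c A ax1" using crev[OF ax1] by simp
    then show False using lt' gx gy by simp
  qed
  obtain B p1 p2 p3 where B: "is_interval B ax1" "B \<noteq> {}" "p1 < p2" "p2 < p3" "p3 < m"
    "ax2 ! p1 \<in> B" "ax2 ! p3 \<in> B" "ax2 ! p2 \<notin> B"
  proof (cases "0 < i")
    case True
    define B where "B = rng ax1 (i - 1) i"
    have Be: "B = {ax1 ! (i - 1), ax1 ! i}" unfolding B_def using rng_pair[of ax1 "i - 1"] True by simp
    have s1: "sg i j (i - 1) = i - 1" "sg i j j = i" "sg i j i = j" unfolding sg_def using True ij by auto
    have im: "i - 1 < m" "i < m" using ij jm by auto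
    have "ax2 ! (i - 1) = ax1 ! (i - 1)" "ax2 ! j = ax1 ! i" using nth2[OF im(1)] nth2[OF jm] s1 by auto
    then have "ax2 ! (i - 1) \<in> B" "ax2 ! j \<in> B" using Be by auto
    moreover have "ax2 ! i \<notin> B"
    proof
      assume "ax2 ! i \<in> B"
      then have "ax1 ! j = ax1 ! (i - 1) \<or> ax1 ! j = ax1 ! i" using nth2[of i] s1 Be ij jm by simp
      then show False
      proof
        assume "ax1 ! j = ax1 ! (i - 1)" then have "j = i - 1" using dist1[OF jm im(1)] by blast
        then show False using ij by simp
      next
        assume "ax1 ! j = ax1 ! i" then have "j = i" using dist1[OF jm im(2)] by blast
        then show False using ij by simp
      qed
    qed
    moreover have "is_interval B ax1" unfolding B_def using rng_interval[OF ax1] l1 ij jm by simp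
    moreover have "B \<noteq> {}" using Be by simp
    ultimately show ?thesis using that[of B "i - 1" i j] True ij jm by auto
  next
    case False
    then have i0: "i = 0" by simp
    then have sj: "Suc j < m" using nd jm by simp
    define B where "B = rng ax1 j (Suc j)"
    have Be: "B = {ax1 ! j, ax1 ! Suc j}" unfolding B_def using rng_pair[of ax1 j] by simp
    have s1: "sg i j i = j" "sg i j (Suc j) = Suc j" "sg i j j = i" unfolding sg_def using ij by auto
    have im: "i < m" using ij jm by auto
    have "ax2 ! i = ax1 ! j" "ax2 ! Suc j = ax1 ! Suc j" using nth2[OF im] nth2[OF sj] s1 by auto
    then have "ax2 ! i \<in> B" "ax2 ! Suc j \<in> B" using Be by auto
    moreover have "ax2 ! j \<notin> B"
    proof
      assume "ax2 ! j \<in> B"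
      then have "ax1 ! i = ax1 ! j \<or> ax1 ! i = ax1 ! Suc j" using nth2[of j] s1 Be ij jm by simp
      then show False
      proof
        assume "ax1 ! i = ax1 ! j" then have "i = j" using dist1[OF im jm] by blast
        then show False using ij by simp
      next
        assume "ax1 ! i = ax1 ! Suc j" then have "i = Suc j" using dist1[OF im sj] by blast
        then show False using ij by simp
      qed
    qed
    moreover have "is_interval B ax1" unfolding B_def using rng_interval[OF ax1] l1 sj by simp
    moreover have "B \<noteq> {}" using Be by simp
    ultimately show ?thesis using that[of B i j "Suc j"] ij sj by auto
  qed
  have cB1: "c B ax1 = 0" using c0[OF ax1] B by simp
  have nB2: "\<not> is_interval B ax2"
  proof
    assume "is_interval B ax2"
    moreover have "pos ax2 (ax2 ! p1) = p1" "pos ax2 (ax2 ! p3) = p3" using pos_nth[OF ax2] l2 B by auto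
    ultimately have "ax2 ! p2 \<in> B" using B unfolding interval_pos[OF ax2] by metis
    then show False using B by simp
  qed
  define e where "e = c B ax2"
  have e0: "e > 0" using cnn[OF ax2, of B] c0[OF ax2, of B] nB2 unfolding e_def by simp
  define D where "D = g x - g y"
  have D0: "D > 0" using lt' D_def by simp
  obtain Q where Q: "set Q = {S. S \<noteq> {} \<and> is_interval S ax1 \<and> is_interval S ax2}"
    using finite_list[of "{S :: 'c set. S \<noteq> {} \<and> is_interval S ax1 \<and> is_interval S ax2}"] by auto
  define W where "W = (\<lambda>ax. (\<Sum>S\<leftarrow>Q. c S ax))"
  have Wnn: "\<And>ax. is_axis ax \<Longrightarrow> W ax \<ge> 0" unfolding W_def using cnn by (intro sum_list_nonneg) auto
  have W0: "\<And>ax. is_axis ax \<Longrightarrow> W ax = 0 \<longleftrightarrow> (\<forall>S\<in>set Q. is_interval S ax)"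
  proof -
    fix ax :: "'c list" assume ax: "is_axis ax"
    have "W ax = 0 \<longleftrightarrow> (\<forall>v\<in>set (map (\<lambda>S. c S ax) Q). v = 0)"
      unfolding W_def using cnn[OF ax] by (intro sum_list_nonneg_eq_0_iff) auto
    also have "\<dots> \<longleftrightarrow> (\<forall>S\<in>set Q. is_interval S ax)" using c0[OF ax] by auto
    finally show "W ax = 0 \<longleftrightarrow> (\<forall>S\<in>set Q. is_interval S ax)" .
  qed
  have W1: "W ax1 = 0" using W0[OF ax1] Q by auto
  have W2: "W ax2 = 0" using W0[OF ax2] Q by auto
  have Wrev: "\<And>ax. is_axis ax \<Longrightarrow> W (rev ax) = W ax" unfolding W_def using crev by simp
  have Wpos: "\<And>ax. is_axis ax \<Longrightarrow> W ax = 0 \<Longrightarrow> ax = ax1 \<or> ax = rev ax1 \<or> ax = ax2 \<or> ax = rev ax2"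
  proof -
    fix ax :: "'c list" assume ax: "is_axis ax" "W ax = 0"
    then have "\<forall>S\<in>set Q. is_interval S ax" using W0 by blast
    then have "\<And>S. S \<noteq> {} \<Longrightarrow> is_interval S ax1 \<Longrightarrow> is_interval S (revseg i j ax1) \<Longrightarrow> is_interval S ax"
      using Q ax2_def by auto
    from FL[OF ax1 ij ax(1) this] show "ax = ax1 \<or> ax = rev ax1 \<or> ax = ax2 \<or> ax = rev ax2"
      unfolding ax2_def by blast
  qed
  define k where "k = nat \<lceil>e / D\<rceil>"
  have eD: "e / D > 0" using e0 D0 by simp
  have kr: "real k = of_int \<lceil>e / D\<rceil>" unfolding k_def using eD by simp
  have "e / D \<le> real k" using le_of_int_ceiling[of "e / D"] kr by simp
  then have k1: "e \<le> real k * D" using D0 by (simp add: pos_divide_le_eq)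
  have "real k - 1 < e / D" using ceiling_correct[of "e / D"] kr by simp
  then have k2: "(real k - 1) * D < e" using D0 by (simp add: pos_less_divide_eq)
  have kpos: "k \<ge> 1" using k1 e0 by (cases k) auto
  define M where "M = real k * g y + e"
  obtain N :: nat where N: "\<forall>w\<in>W ` axes. w > 0 \<longrightarrow> M \<le> real N * w"
    using exN[of "W ` axes" M] finite_axes by blast
  define P where "P = replicate k A @ concat (replicate N Q) @ [B]"
  have tot: "\<And>ax. total_cost c P ax = real k * c A ax + real N * W ax + c B ax"
    unfolding P_def total_cost_def W_def by (simp add: sum_rep sum_concat_rep sum_list_replicate)
  have t2: "total_cost c P ax2 = M" using tot gy W2 e_def M_def by simp
  have opt: "ax2 \<in> f P"
    unfolding f_scoring scoring_rule_def c_def[symmetric]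
  proof (intro CollectI conjI ballI)
    show "ax2 \<in> axes" unfolding axes_def using ax2 by simp
    fix ax :: "'c list" assume "ax \<in> axes"
    then have ax: "is_axis ax" unfolding axes_def by simp
    show "total_cost c P ax2 \<le> total_cost c P ax"
    proof (cases "W ax = 0")
      case False
      then have "W ax > 0" using Wnn[OF ax] by simp
      then have "M \<le> real N * W ax" using N \<open>ax \<in> axes\<close> by blast
      moreover have "real k * c A ax \<ge> 0" "c B ax \<ge> 0" using cnn[OF ax] by auto
      ultimately show ?thesis using t2 tot by simp
    next
      case True
      have t1: "total_cost c P ax1 = real k * g x" using tot gx W1 cB1 by simp
      have "real k * g y + e \<le> real k * g x" using k1 D_def by (simp add: algebra_simps)
      then have le1: "total_cost c P ax2 \<le> total_cost c P ax1" using t1 t2 M_def by simp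
      have rv: "\<And>b. is_axis b \<Longrightarrow> total_cost c P (rev b) = total_cost c P b"
        using tot crev Wrev by simp
      from Wpos[OF ax True] show ?thesis
        using le1 rv[OF ax1] rv[OF ax2] by auto
    qed
  qed
  have prof: "is_profile P" unfolding is_profile_def is_ballot_def P_def using A B(2) Q by auto
  have len: "0 < length P" unfolding P_def using kpos by simp
  have P0: "P ! 0 = A" unfolding P_def using kpos by (cases k) auto
  have niA: "\<not> is_interval (P ! 0) ax2" using ny P0 ax2_def by simp
  have opt2: "ax2 \<in> f (P[0 := interval_hull ax2 (P ! 0)])"
    using mono unfolding ballot_monotone_def using prof len opt niA by blast
  define H where "H = interval_hull ax2 A"
  have P': "P[0 := interval_hull ax2 (P ! 0)] = H # (replicate (k - 1) A @ concat (replicate N Q) @ [B])"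
    unfolding P0 H_def P_def using kpos by (cases k) auto
  have tot': "\<And>ax. total_cost c (P[0 := interval_hull ax2 (P ! 0)]) ax
      = c H ax + real (k - 1) * c A ax + real N * W ax + c B ax"
    unfolding P' total_cost_def W_def by (simp add: sum_rep sum_concat_rep sum_list_replicate)
  have cH2: "c H ax2 = 0" using c0[OF ax2] hull_interval[OF ax2] H_def by simp
  have cH1: "c H ax1 = 0" using c0[OF ax1] hH H_def ax2_def by simp
  have "total_cost c (P[0 := interval_hull ax2 (P ! 0)]) ax2 \<le> total_cost c (P[0 := interval_hull ax2 (P ! 0)]) ax1"
    using opt2 ax1 unfolding f_scoring scoring_rule_def c_def[symmetric] axes_def by blast
  then have "real (k - 1) * g y + e \<le> real (k - 1) * g x"
    using tot' cH1 cH2 gx gy W1 W2 cB1 e_def by simp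
  moreover have "real (k - 1) = real k - 1" using kpos by simp
  ultimately have "e \<le> (real k - 1) * D" unfolding D_def by (simp add: algebra_simps)
  then show False using k2 by simp
qed



definition inh :: "bool list \<Rightarrow> nat \<Rightarrow> bool" where
  "inh x t \<longleftrightarrow> (\<exists>s\<le>t. x ! s) \<and> (\<exists>u. t \<le> u \<and> u < length x \<and> x ! u)"

definition hv :: "bool list \<Rightarrow> bool list" where
  "hv x = map (inh x) [0..<length x]"

definition ones :: "bool list \<Rightarrow> nat set" where
  "ones x = {t. t < length x \<and> x ! t}"

definition izeros :: "bool list \<Rightarrow> nat set" where
  "izeros x = {t. t < length x \<and> inh x t \<and> \<not> x ! t}"

lemma len_hv[simp]: "length (hv x) = length x" unfolding hv_def by simp

lemma nth_hv: "t < length x \<Longrightarrow> hv x ! t = inh x t" unfolding hv_def by simp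

lemma inh_pe:
  assumes "p \<in> ones x" "e \<in> ones x" "ones x \<subseteq> {p..e}" "t < length x"
  shows "inh x t \<longleftrightarrow> p \<le> t \<and> t \<le> e"
proof
  assume "inh x t"
  then obtain s u where "s \<le> t" "x ! s" "t \<le> u" "u < length x" "x ! u" unfolding inh_def by blast
  moreover have "s < length x" using calculation by simp
  ultimately have "s \<in> ones x" "u \<in> ones x" unfolding ones_def by auto
  then show "p \<le> t \<and> t \<le> e" using assms(3) \<open>s \<le> t\<close> \<open>t \<le> u\<close> by auto
next
  assume "p \<le> t \<and> t \<le> e"
  then show "inh x t" using assms(1,2) unfolding inh_def ones_def by blast
qed

lemma contig_hv: "contiguous_ones (hv x)"
  unfolding contiguous_ones_def
proof (intro allI impI)
  fix i j k assume a: "i < j \<and> j < k \<and> k < length (hv x) \<and> hv x ! i \<and> hv x ! k"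
  then have "inh x i" "inh x k" using nth_hv[of i x] nth_hv[of k x] by auto
  then have "(\<exists>s\<le>j. x ! s) \<and> (\<exists>u. j \<le> u \<and> u < length x \<and> x ! u)" unfolding inh_def using a
    by (meson less_imp_le_nat order.trans)
  then show "hv x ! j" using a nth_hv[of j x] unfolding inh_def by simp
qed

lemma contig_izeros: "contiguous_ones x \<longleftrightarrow> izeros x = {}"
proof
  assume c: "contiguous_ones x"
  show "izeros x = {}"
  proof (rule ccontr)
    assume "izeros x \<noteq> {}"
    then obtain t where t: "t < length x" "inh x t" "\<not> x ! t" unfolding izeros_def by blast
    then obtain s u where su: "s \<le> t" "x ! s" "t \<le> u" "u < length x" "x ! u" unfolding inh_def by blast
    then have "s < t" "t < u" using t by (metis le_neq_implies_less)+
    then show False using c su t unfolding contiguous_ones_def by blast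
  qed
next
  assume z: "izeros x = {}"
  show "contiguous_ones x" unfolding contiguous_ones_def
  proof (intro allI impI)
    fix i j k assume a: "i < j \<and> j < k \<and> k < length x \<and> x ! i \<and> x ! k"
    then have "inh x j" unfolding inh_def by (meson less_imp_le_nat)
    then show "x ! j" using z a unfolding izeros_def by auto
  qed
qed

lemma hull_av: assumes ax: "is_axis ax"
  shows "approval_vector (interval_hull ax A) ax = hv (approval_vector A ax)"
proof (rule nth_equalityI)
  show "length (approval_vector (interval_hull ax A) ax) = length (hv (approval_vector A ax))" by simp
  fix t assume "t < length (approval_vector (interval_hull ax A) ax)"
  then have t: "t < length ax" by simp
  have pt: "pos ax (ax ! t) = t" using pos_nth[OF ax t] .
  have "ax ! t \<in> interval_hull ax A \<longleftrightarrow> inh (approval_vector A ax) t"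
  proof
    assume "ax ! t \<in> interval_hull ax A"
    then obtain y z where yz: "y \<in> A" "z \<in> A" "axis_le ax y (ax ! t)" "axis_le ax (ax ! t) z"
      unfolding interval_hull_def by blast
    then have "pos ax y \<le> t" "t \<le> pos ax z" using axis_le_pos[OF ax] pt by auto
    moreover have "pos ax y < length ax" "ax ! pos ax y = y" "pos ax z < length ax" "ax ! pos ax z = z"
      using pos_props[OF ax] by auto
    ultimately have s1: "pos ax y \<le> t \<and> approval_vector A ax ! pos ax y"
      and u1: "t \<le> pos ax z \<and> pos ax z < length (approval_vector A ax) \<and> approval_vector A ax ! pos ax z"
      using yz by (auto simp: nth_av)
    show "inh (approval_vector A ax) t" unfolding inh_def using s1 u1 by blast
  next
    assume "inh (approval_vector A ax) t"
    then obtain s u where su: "s \<le> t" "approval_vector A ax ! s" "t \<le> u" "u < length ax" "approval_vector A ax ! u"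
      unfolding inh_def by auto
    then have s: "s < length ax" by simp
    have "ax ! s \<in> A" "ax ! u \<in> A" using su s by (auto simp: nth_av)
    moreover have "axis_le ax (ax ! s) (ax ! t)" "axis_le ax (ax ! t) (ax ! u)"
      using axis_le_pos[OF ax] pos_nth[OF ax] su s t by auto
    ultimately show "ax ! t \<in> interval_hull ax A" unfolding interval_hull_def by blast
  qed
  then show "approval_vector (interval_hull ax A) ax ! t = hv (approval_vector A ax) ! t"
    using t by (simp add: nth_av nth_hv)
qed

lemma card_ones_av: assumes ax: "is_axis ax" shows "card (ones (approval_vector A ax)) = card A"
proof -
  have "bij_betw ((!) ax) (ones (approval_vector A ax)) A"
  proof (rule bij_betwI')
    fix a b assume "a \<in> ones (approval_vector A ax)" "b \<in> ones (approval_vector A ax)"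
    then show "(ax ! a = ax ! b) = (a = b)" using ax unfolding ones_def is_axis_def
      by (simp add: nth_eq_iff_index_eq)
  next
    fix a assume "a \<in> ones (approval_vector A ax)" then show "ax ! a \<in> A"
      unfolding ones_def by (auto simp: nth_av)
  next
    fix c assume "c \<in> A"
    then have "pos ax c \<in> ones (approval_vector A ax)" "c = ax ! pos ax c"
      using pos_props[OF ax, of c] unfolding ones_def by (auto simp: nth_av)
    then show "\<exists>a\<in>ones (approval_vector A ax). c = ax ! a" by blast
  qed
  then show ?thesis by (rule bij_betw_same_card)
qed

lemma card_izeros_av: assumes ax: "is_axis ax"
  shows "card (izeros (approval_vector A ax)) = card (interfering A ax)"
proof -
  have "bij_betw ((!) ax) (izeros (approval_vector A ax)) (interfering A ax)"
  proof (rule bij_betwI')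
    fix a b assume "a \<in> izeros (approval_vector A ax)" "b \<in> izeros (approval_vector A ax)"
    then show "(ax ! a = ax ! b) = (a = b)" using ax unfolding izeros_def is_axis_def
      by (simp add: nth_eq_iff_index_eq)
  next
    fix t assume "t \<in> izeros (approval_vector A ax)"
    then have t: "t < length ax" "inh (approval_vector A ax) t" "ax ! t \<notin> A"
      unfolding izeros_def by (auto simp: nth_av)
    then obtain s u where su: "s \<le> t" "approval_vector A ax ! s" "t \<le> u" "u < length ax" "approval_vector A ax ! u"
      unfolding inh_def by auto
    then have s: "s < length ax" using t by simp
    have A: "ax ! s \<in> A" "ax ! u \<in> A" using su s by (auto simp: nth_av)
    then have "s \<noteq> t" "u \<noteq> t" using t by auto
    then have "s < t" "t < u" using su by auto
    then have "axis_less ax (ax ! s) (ax ! t)" "axis_less ax (ax ! t) (ax ! u)"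
      using axis_less_pos[OF ax] pos_nth[OF ax] su s t by auto
    then show "ax ! t \<in> interfering A ax" unfolding interfering_def using A t by blast
  next
    fix c assume "c \<in> interfering A ax"
    then obtain a b where ab: "c \<notin> A" "a \<in> A" "b \<in> A" "axis_less ax a c" "axis_less ax c b"
      unfolding interfering_def by blast
    then have lt: "pos ax a < pos ax c" "pos ax c < pos ax b" using axis_less_pos[OF ax] by auto
    have pp: "pos ax a < length ax" "ax ! pos ax a = a" "pos ax b < length ax" "ax ! pos ax b = b"
      "pos ax c < length ax" "ax ! pos ax c = c" using pos_props[OF ax] by auto
    have s1: "pos ax a \<le> pos ax c \<and> approval_vector A ax ! pos ax a"
      and u1: "pos ax c \<le> pos ax b \<and> pos ax b < length (approval_vector A ax) \<and> approval_vector A ax ! pos ax b"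
      using lt pp ab by (auto simp: nth_av)
    have "inh (approval_vector A ax) (pos ax c)" unfolding inh_def using s1 u1 by blast
    then have "pos ax c \<in> izeros (approval_vector A ax)" unfolding izeros_def using pp ab by (simp add: nth_av)
    then show "\<exists>a\<in>izeros (approval_vector A ax). c = ax ! a" using pp by metis
  qed
  then show ?thesis by (rule bij_betw_same_card)
qed



lemma pre_sg: assumes "j < n" "P \<subseteq> {..<n}"
  shows "{t. t < n \<and> sg i j t \<in> P} = sg i j ` P"
proof
  show "{t. t < n \<and> sg i j t \<in> P} \<subseteq> sg i j ` P"
  proof
    fix t assume "t \<in> {t. t < n \<and> sg i j t \<in> P}"
    then have "sg i j t \<in> P" by simp
    then show "t \<in> sg i j ` P" by (metis image_eqI sg_sg)
  qed
  show "sg i j ` P \<subseteq> {t. t < n \<and> sg i j t \<in> P}"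
  proof
    fix t assume "t \<in> sg i j ` P"
    then obtain s where s: "s \<in> P" "t = sg i j s" by blast
    then have "s < n" using assms by auto
    then have "t < n" using s sg_lt[OF assms(1)] by simp
    then show "t \<in> {t. t < n \<and> sg i j t \<in> P}" using s by simp
  qed
qed

lemma inj_sg: "inj_on (sg i j) P"
  by (metis inj_on_inverseI sg_sg)

lemma ones_revseg: assumes "j < length x" shows "ones (revseg i j x) = sg i j ` ones x"
proof -
  have "ones (revseg i j x) = {t. t < length x \<and> sg i j t \<in> ones x}"
    unfolding ones_def using assms sg_lt by (auto simp: nth_revseg)
  also have "\<dots> = sg i j ` ones x" using assms by (intro pre_sg) (auto simp: ones_def)
  finally show ?thesis .
qed

lemma izeros_revseg: assumes "j < length x" and h: "hv (revseg i j x) = revseg i j (hv x)"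
  shows "izeros (revseg i j x) = sg i j ` izeros x"
proof -
  have ih: "\<And>t. t < length x \<Longrightarrow> inh (revseg i j x) t = inh x (sg i j t)"
  proof -
    fix t assume t: "t < length x"
    have "inh (revseg i j x) t = hv (revseg i j x) ! t" using t by (simp add: nth_hv)
    also have "\<dots> = hv x ! sg i j t" using h t by (simp add: nth_revseg)
    also have "\<dots> = inh x (sg i j t)" using t assms sg_lt by (simp add: nth_hv)
    finally show "inh (revseg i j x) t = inh x (sg i j t)" .
  qed
  have "izeros (revseg i j x) = {t. t < length x \<and> sg i j t \<in> izeros x}"
    unfolding izeros_def using assms sg_lt ih by (auto simp: nth_revseg)
  also have "\<dots> = sg i j ` izeros x" using assms by (intro pre_sg) (auto simp: izeros_def)
  finally show ?thesis .
qed

lemma fin_ones: "finite (ones x)" unfolding ones_def by simp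
lemma fin_izeros: "finite (izeros x)" unfolding izeros_def by simp

lemma CNT: assumes "j < length x" and h: "hv (revseg i j x) = revseg i j (hv x)"
  shows "card (ones (revseg i j x)) = card (ones x)" "card (izeros (revseg i j x)) = card (izeros x)"
  using ones_revseg[OF assms(1)] izeros_revseg[OF assms] card_image[OF inj_sg] by auto

lemma move_cover:
  assumes p: "p \<in> ones x" and e: "e \<in> ones x" and pe: "ones x \<subseteq> {p..e}"
    and ip: "i \<le> p" and ej: "e \<le> j" and jl: "j < length x"
  shows "hv (revseg i j x) = revseg i j (hv x)"
proof -
  define y where "y = revseg i j x"
  have ly: "length y = length x" unfolding y_def by simp
  have pe': "p \<le> e" using p pe by auto
  have oy: "ones y = sg i j ` ones x" unfolding y_def using ones_revseg[OF jl] .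
  have sgp: "sg i j p = i + j - p" "sg i j e = i + j - e" unfolding sg_def using ip ej pe' by auto
  have p': "i + j - e \<in> ones y" using oy e sgp by (metis image_eqI)
  have e': "i + j - p \<in> ones y" using oy p sgp by (metis image_eqI)
  have pe2: "ones y \<subseteq> {i + j - e..i + j - p}"
  proof
    fix t assume "t \<in> ones y"
    then obtain s where s: "s \<in> ones x" "t = sg i j s" using oy by blast
    then have "p \<le> s" "s \<le> e" using pe by auto
    then show "t \<in> {i + j - e..i + j - p}" using s ip ej unfolding sg_def by auto
  qed
  show ?thesis
  proof (rule nth_equalityI)
    show "length (hv (revseg i j x)) = length (revseg i j (hv x))" by simp
    fix t assume "t < length (hv (revseg i j x))"
    then have t: "t < length x" by simp
    have "hv (revseg i j x) ! t = inh y t" using t ly unfolding y_def by (simp add: nth_hv)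
    also have "\<dots> = (i + j - e \<le> t \<and> t \<le> i + j - p)" using inh_pe[OF p' e' pe2] t ly by simp
    also have "\<dots> = (p \<le> sg i j t \<and> sg i j t \<le> e)" using ip ej pe' unfolding sg_def by auto
    also have "\<dots> = inh x (sg i j t)" using inh_pe[OF p e pe] sg_lt[OF jl t] by simp
    also have "\<dots> = revseg i j (hv x) ! t" using t sg_lt[OF jl t] by (simp add: nth_revseg nth_hv)
    finally show "hv (revseg i j x) ! t = revseg i j (hv x) ! t" .
  qed
qed

lemma move_inside:
  assumes p: "p \<in> ones x" and e: "e \<in> ones x" and pe: "ones x \<subseteq> {p..e}"
    and ip: "p < i" and ej: "j < e" and ij: "i \<le> j" and jl: "j < length x"
  shows "hv (revseg i j x) = revseg i j (hv x)"
proof -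
  define y where "y = revseg i j x"
  have ly: "length y = length x" unfolding y_def by simp
  have oy: "ones y = sg i j ` ones x" unfolding y_def using ones_revseg[OF jl] .
  have sgp: "sg i j p = p" "sg i j e = e" unfolding sg_def using ip ej by auto
  have p': "p \<in> ones y" using oy p sgp by (metis image_eqI)
  have e': "e \<in> ones y" using oy e sgp by (metis image_eqI)
  have pe2: "ones y \<subseteq> {p..e}"
  proof
    fix t assume "t \<in> ones y"
    then obtain s where s: "s \<in> ones x" "t = sg i j s" using oy by blast
    then have "p \<le> s" "s \<le> e" using pe by auto
    then show "t \<in> {p..e}" using s ip ej unfolding sg_def by auto
  qed
  show ?thesis
  proof (rule nth_equalityI)
    show "length (hv (revseg i j x)) = length (revseg i j (hv x))" by simp
    fix t assume "t < length (hv (revseg i j x))"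
    then have t: "t < length x" by simp
    have "hv (revseg i j x) ! t = inh y t" using t ly unfolding y_def by (simp add: nth_hv)
    also have "\<dots> = (p \<le> t \<and> t \<le> e)" using inh_pe[OF p' e' pe2] t ly by simp
    also have "\<dots> = (p \<le> sg i j t \<and> sg i j t \<le> e)" using ip ej unfolding sg_def by auto
    also have "\<dots> = inh x (sg i j t)" using inh_pe[OF p e pe] sg_lt[OF jl t] by simp
    also have "\<dots> = revseg i j (hv x) ! t" using t sg_lt[OF jl t] by (simp add: nth_revseg nth_hv)
    finally show "hv (revseg i j x) ! t = revseg i j (hv x) ! t" .
  qed
qed

lemma noncontig_ones: assumes "\<not> contiguous_ones x" shows "ones x \<noteq> {}"
proof -
  obtain i j k where "i < j" "j < k" "k < length x" "x ! i" using assms unfolding contiguous_ones_def by blast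
  then have "i \<in> ones x" unfolding ones_def by simp
  then show ?thesis by blast
qed

lemma minmax_ones: assumes "ones x \<noteq> {}"
  shows "Min (ones x) \<in> ones x" "Max (ones x) \<in> ones x" "ones x \<subseteq> {Min (ones x)..Max (ones x)}"
  using assms fin_ones by auto

lemma noncontig_card: "\<not> contiguous_ones x \<longleftrightarrow> card (izeros x) \<noteq> 0"
  using contig_izeros[of x] fin_izeros[of x] by simp



definition canon :: "nat \<Rightarrow> nat \<Rightarrow> nat \<Rightarrow> bool list" where
  "canon m a b = map (\<lambda>t. t = 0 \<or> (b < t \<and> t < a + b)) [0..<m]"

locale setting =
  fixes g :: "bool list \<Rightarrow> real"
    and f :: "'c::finite profile \<Rightarrow> 'c list set"
  assumes g_nonneg: "\<And>x. length x = card (UNIV :: 'c set) \<Longrightarrow> g x \<ge> 0"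
    and g_zero: "\<And>x. length x = card (UNIV :: 'c set) \<Longrightarrow> (g x = 0 \<longleftrightarrow> contiguous_ones x)"
    and g_rev: "\<And>x. length x = card (UNIV :: 'c set) \<Longrightarrow> g x = g (rev x)"
    and f_scoring: "f = scoring_rule (\<lambda>A ax. g (approval_vector A ax))"
    and mono: "ballot_monotone f"
begin

lemma RL':
  fixes ax1 :: "'c list"
  assumes "is_axis ax1" "i < j" "j < card (UNIV :: 'c set)" "A \<noteq> {}"
    "\<not> is_interval A (revseg i j ax1)" "is_interval (interval_hull (revseg i j ax1) A) ax1"
  shows "g (approval_vector A ax1) \<le> g (approval_vector A (revseg i j ax1))"
proof (rule RL[where g=g and f=f])
  show "\<And>x. length x = card (UNIV :: 'c set) \<Longrightarrow> g x \<ge> 0" by (rule g_nonneg)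
  show "\<And>x. length x = card (UNIV :: 'c set) \<Longrightarrow> (g x = 0 \<longleftrightarrow> contiguous_ones x)" by (rule g_zero)
  show "\<And>x. length x = card (UNIV :: 'c set) \<Longrightarrow> g x = g (rev x)" by (rule g_rev)
qed (use f_scoring mono assms in auto)

lemma V:
  assumes lx: "length x = card (UNIV::'c set)" and ij: "i < j" "j < length x"
    and hvc: "hv (revseg i j x) = revseg i j (hv x)"
    and nx: "\<not> contiguous_ones x" and ny: "\<not> contiguous_ones (revseg i j x)"
  shows "g x = g (revseg i j x)"
proof -
  obtain ax0 :: "'c list" where d0: "distinct ax0" "set ax0 = UNIV"
    using finite_distinct_list[of "UNIV :: 'c set"] by auto
  have ax0: "is_axis ax0" unfolding is_axis_def using d0 by simp
  have l0: "length ax0 = length x" using axis_len[OF ax0] lx by simp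
  define A where "A = {ax0 ! t | t. t < length x \<and> x ! t}"
  have avA: "approval_vector A ax0 = x"
  proof (rule nth_equalityI)
    show "length (approval_vector A ax0) = length x" using l0 by simp
    fix t assume "t < length (approval_vector A ax0)"
    then have t: "t < length x" using l0 by simp
    have "ax0 ! t \<in> A \<longleftrightarrow> x ! t"
    proof
      assume "ax0 ! t \<in> A"
      then obtain t' where t': "ax0 ! t = ax0 ! t'" "t' < length x" "x ! t'" unfolding A_def by blast
      then have "t = t'" using d0 l0 t nth_eq_iff_index_eq by metis
      then show "x ! t" using t' by simp
    next
      assume "x ! t" then show "ax0 ! t \<in> A" unfolding A_def using t by blast
    qed
    then show "approval_vector A ax0 ! t = x ! t" using t l0 by (simp add: nth_av)
  qed
  have A: "A \<noteq> {}"
  proof -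
    obtain s where "s \<in> ones x" using noncontig_ones[OF nx] by blast
    then have "ax0 ! s \<in> A" unfolding A_def ones_def by blast
    then show ?thesis by blast
  qed
  have jm: "j < card (UNIV :: 'c set)" using ij lx by simp
  define ax2 where "ax2 = revseg i j ax0"
  have ax2: "is_axis ax2" unfolding ax2_def using revseg_axis[OF ax0] ij l0 by simp
  have l2: "length ax2 = length x" unfolding ax2_def using l0 by simp
  have bk: "revseg i j ax2 = ax0" unfolding ax2_def using ij l0 by (intro revseg_revseg) simp
  have jl0: "j < length ax0" using ij l0 by simp
  have jl2: "j < length ax2" using ij l2 by simp
  have av2: "\<And>S. approval_vector S ax2 = revseg i j (approval_vector S ax0)"
    unfolding ax2_def using av_revseg[OF jl0] by blast
  have av0: "\<And>S. approval_vector S ax0 = revseg i j (approval_vector S ax2)"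
    using av_revseg[OF jl2] bk by metis
  have y: "approval_vector A ax2 = revseg i j x" using av2 avA by simp
  have n1: "\<not> is_interval A ax2"
    using ny y contig_iff[OF ax2, of A] by simp
  then have n1: "\<not> is_interval A (revseg i j ax0)" using ax2_def by simp
  have "approval_vector (interval_hull ax2 A) ax0 = revseg i j (hv (approval_vector A ax2))"
    using av0 hull_av[OF ax2] by simp
  also have "\<dots> = hv x" using y hvc revseg_revseg[of j "hv x" i] ij by simp
  finally have "is_interval (interval_hull ax2 A) ax0" using contig_iff[OF ax0] contig_hv by metis
  then have h1: "is_interval (interval_hull (revseg i j ax0) A) ax0" using ax2_def by simp
  have le1: "g (approval_vector A ax0) \<le> g (approval_vector A (revseg i j ax0))"
    using RL'[OF ax0 ij(1) jm A n1 h1] .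
  have n2: "\<not> is_interval A ax0"
    using nx avA contig_iff[OF ax0, of A] by simp
  then have n2: "\<not> is_interval A (revseg i j ax2)" using bk by simp
  have "approval_vector (interval_hull ax0 A) ax2 = revseg i j (hv (approval_vector A ax0))"
    using av2 hull_av[OF ax0] by simp
  also have "\<dots> = hv (revseg i j x)" using avA hvc by simp
  finally have "is_interval (interval_hull ax0 A) ax2" using contig_iff[OF ax2] contig_hv by metis
  then have h2: "is_interval (interval_hull (revseg i j ax2) A) ax2" using bk by simp
  have le2: "g (approval_vector A ax2) \<le> g (approval_vector A (revseg i j ax2))"
    using RL'[OF ax2 ij(1) jm A n2 h2] .
  show ?thesis using le1 le2 avA y bk ax2_def by simp
qed

lemma shiftA:
  assumes lx: "length x = card (UNIV::'c set)" and nx: "\<not> contiguous_ones x"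
  shows "\<exists>y. length y = length x \<and> \<not> contiguous_ones y \<and> y ! 0 \<and> card (ones y) = card (ones x)
           \<and> card (izeros y) = card (izeros x) \<and> g y = g x"
proof -
  have ne: "ones x \<noteq> {}" using noncontig_ones[OF nx] .
  define p where "p = Min (ones x)"
  define e where "e = Max (ones x)"
  have p: "p \<in> ones x" and e: "e \<in> ones x" and pe: "ones x \<subseteq> {p..e}"
    using minmax_ones[OF ne] p_def e_def by auto
  have el: "e < length x" using e unfolding ones_def by simp
  show ?thesis
  proof (cases "p = 0")
    case True
    then have "x ! 0" using p unfolding ones_def by simp
    then show ?thesis using nx by blast
  next
    case False
    then have e0: "0 < e" using p pe by auto
    define y where "y = revseg 0 e x"
    have hvc: "hv y = revseg 0 e (hv x)" unfolding y_def
      using move_cover[OF p e pe _ order.refl el] by simp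
    have c: "card (ones y) = card (ones x)" "card (izeros y) = card (izeros x)"
      using CNT[OF el hvc[unfolded y_def]] y_def by auto
    have ny: "\<not> contiguous_ones y" using c nx noncontig_card by metis
    have gy: "g x = g y" unfolding y_def using V[OF lx e0 el hvc[unfolded y_def] nx ny[unfolded y_def]] .
    have "0 < length x" using el by linarith
    then have "y ! 0 = x ! e" unfolding y_def by (simp add: nth_revseg sg_def)
    then have "y ! 0" using e unfolding ones_def by simp
    moreover have "length y = length x" unfolding y_def by simp
    ultimately show ?thesis using c ny gy by metis
  qed
qed


lemma swapB:
  assumes "length x = card (UNIV::'c set)" "\<not> contiguous_ones x" "x ! 0"
  shows "g x = g (canon (length x) (card (ones x)) (card (izeros x)))"
  using assms
proof (induction "\<Sum> (izeros x)" arbitrary: x rule: less_induct)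
  case less
  note lx = less.prems(1) and nx = less.prems(2) and x0 = less.prems(3)
  define I where "I = izeros x"
  define e where "e = Max (ones x)"
  have len0: "0 < length x" using lx card_pos by simp
  have ne: "ones x \<noteq> {}" using noncontig_ones[OF nx] .
  have p: "0 \<in> ones x" using x0 len0 unfolding ones_def by simp
  have e: "e \<in> ones x" using minmax_ones[OF ne] e_def by simp
  have pe: "ones x \<subseteq> {0..e}" using fin_ones e_def by auto
  have el: "e < length x" using e unfolding ones_def by simp
  have xe: "x ! e" using e unfolding ones_def by simp
  have inhx: "\<And>t. t < length x \<Longrightarrow> inh x t \<longleftrightarrow> t \<le> e" using inh_pe[OF p e pe] by simp
  have Ip: "\<And>z. z \<in> I \<Longrightarrow> 0 < z \<and> z < e \<and> \<not> x ! z \<and> z < length x"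
  proof -
    fix z assume "z \<in> I"
    then have z: "z < length x" "inh x z" "\<not> x ! z" unfolding I_def izeros_def by auto
    then have "z \<le> e" using inhx by simp
    moreover have "z \<noteq> e" using z xe by auto
    moreover have "z \<noteq> 0"
    proof
      assume "z = 0" then show False using z(3) x0 by simp
    qed
    moreover have "0 < z" using calculation by simp
    ultimately show "0 < z \<and> z < e \<and> \<not> x ! z \<and> z < length x" using z by simp
  qed
  show ?case
  proof (cases "\<exists>z\<in>I. 2 \<le> z \<and> z - 1 \<notin> I")
    case True
    then obtain z where z: "z \<in> I" "2 \<le> z" "z - 1 \<notin> I" by blast
    have zp: "0 < z" "z < e" "\<not> x ! z" "z < length x" using Ip[OF z(1)] by auto
    have z1l: "z - 1 < length x" using zp by simp
    have "inh x (z - 1)" using inhx[OF z1l] zp by simp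
    then have xz1: "x ! (z - 1)" using z(3) z1l unfolding I_def izeros_def by auto
    define y where "y = revseg (z - 1) z x"
    have hvc: "hv (revseg (z - 1) z x) = revseg (z - 1) z (hv x)"
      using move_inside[OF p e pe _ zp(2) _ zp(4)] z(2) by simp
    have c: "card (ones y) = card (ones x)" "card (izeros y) = card (izeros x)"
      using CNT[OF zp(4) hvc] y_def by auto
    have ny: "\<not> contiguous_ones y" using c nx noncontig_card by metis
    have zz: "z - 1 < z" using zp by simp
    have gy: "g x = g y" unfolding y_def using V[OF lx zz zp(4) hvc nx ny[unfolded y_def]] .
    have ly: "length y = length x" unfolding y_def by simp
    have "y ! 0 = x ! sg (z - 1) z 0" unfolding y_def using len0 by (simp add: nth_revseg)
    also have "\<dots> = x ! 0" using z(2) unfolding sg_def by simp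
    finally have y0: "y ! 0" using x0 by simp
    have iy: "izeros y = sg (z - 1) z ` I" unfolding y_def I_def using izeros_revseg[OF zp(4) hvc] .
    have "\<Sum> (izeros y) = (\<Sum>t\<in>I. sg (z - 1) z t)" using iy by (simp add: sum.reindex[OF inj_sg])
    also have "\<dots> < (\<Sum>t\<in>I. t)"
    proof (rule sum_strict_mono_ex1)
      show "finite I" unfolding I_def by (rule fin_izeros)
      show "\<forall>t\<in>I. sg (z - 1) z t \<le> t"
      proof
        fix t assume tI: "t \<in> I"
        show "sg (z - 1) z t \<le> t"
        proof (cases "z - 1 \<le> t \<and> t \<le> z")
          case True
          have "t \<noteq> z - 1" using tI z(3) by auto
          then have "t = z" using True zp(1) by linarith
          then show ?thesis unfolding sg_def using zp by simp
        next
          case False then have "sg (z - 1) z t = t" unfolding sg_def by auto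
          then show ?thesis by simp
        qed
      qed
      have "sg (z - 1) z z = z - 1" unfolding sg_def using zp by auto
      then show "\<exists>t\<in>I. sg (z - 1) z t < t" using z(1) zp by (intro bexI[of _ z]) auto
    qed
    finally have lt: "\<Sum> (izeros y) < \<Sum> (izeros x)" unfolding I_def by simp
    have "g y = g (canon (length y) (card (ones y)) (card (izeros y)))"
      using less.hyps[OF lt] ly lx ny y0 by simp
    then show ?thesis using gy ly c by simp
  next
    case False
    then have cl: "\<And>z. z \<in> I \<Longrightarrow> 2 \<le> z \<Longrightarrow> z - 1 \<in> I" by blast
    have Ine: "I \<noteq> {}" using nx contig_izeros I_def by simp
    have fI: "finite I" unfolding I_def by (rule fin_izeros)
    define M where "M = Max I"
    have MI: "M \<in> I" using Ine fI M_def by simp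
    have down: "\<And>k n. M - n = k \<Longrightarrow> 1 \<le> n \<Longrightarrow> n \<le> M \<Longrightarrow> n \<in> I"
    proof -
      fix k show "\<And>n. M - n = k \<Longrightarrow> 1 \<le> n \<Longrightarrow> n \<le> M \<Longrightarrow> n \<in> I"
      proof (induction k)
        case 0 then have "n = M" by simp
        then show ?case using MI by simp
      next
        case (Suc k)
        then have "M - Suc n = k" "1 \<le> Suc n" "Suc n \<le> M" by auto
        then have "Suc n \<in> I" using Suc.IH by blast
        then show ?case using cl[of "Suc n"] Suc.prems by simp
      qed
    qed
    have Ieq: "I = {1..M}"
    proof
      show "I \<subseteq> {1..M}"
      proof
        fix z assume "z \<in> I" then show "z \<in> {1..M}" using Ip fI M_def by (simp add: Suc_leI)
      qed
      show "{1..M} \<subseteq> I" using down by auto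
    qed
    have cI: "card I = M" using Ieq by simp
    have Me: "M < e" using Ip[OF MI] by simp
    have oeq: "ones x = insert 0 {Suc M..e}"
    proof
      show "ones x \<subseteq> insert 0 {Suc M..e}"
      proof
        fix t assume t: "t \<in> ones x"
        then have tl: "t < length x" "x ! t" "t \<le> e" using pe unfolding ones_def by auto
        show "t \<in> insert 0 {Suc M..e}"
        proof (cases "t = 0")
          case False
          have "t \<notin> I" using Ip tl by blast
          then have "\<not> t \<le> M" using Ieq False by auto
          then show ?thesis using tl by simp
        qed simp
      qed
      show "insert 0 {Suc M..e} \<subseteq> ones x"
      proof
        fix t assume "t \<in> insert 0 {Suc M..e}"
        then consider "t = 0" | "Suc M \<le> t" "t \<le> e" by auto
        then show "t \<in> ones x"
        proof cases
          case 1 then show ?thesis using p by simp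
        next
          case 2
          then have tl: "t < length x" using el by simp
          have "inh x t" using inhx[OF tl] 2 by simp
          moreover have "t \<notin> I" using Ieq 2 by auto
          ultimately have "x ! t" using tl unfolding I_def izeros_def by auto
          then show ?thesis using tl unfolding ones_def by simp
        qed
      qed
    qed
    have co: "card (ones x) = Suc (e - M)" using oeq Me by simp
    have "x = canon (length x) (card (ones x)) (card (izeros x))"
    proof (rule nth_equalityI)
      show "length x = length (canon (length x) (card (ones x)) (card (izeros x)))"
        unfolding canon_def by simp
      fix t assume t: "t < length x"
      have "x ! t \<longleftrightarrow> t \<in> ones x" using t unfolding ones_def by simp
      also have "\<dots> \<longleftrightarrow> t = 0 \<or> (M < t \<and> t < Suc (e - M) + M)" using oeq Me by auto
      also have "\<dots> \<longleftrightarrow> canon (length x) (card (ones x)) (card (izeros x)) ! t"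
        unfolding canon_def using t co cI I_def by simp
      finally show "x ! t = canon (length x) (card (ones x)) (card (izeros x)) ! t" .
    qed
    then show ?thesis by simp
  qed
qed

lemma main_vec:
  assumes "length x = card (UNIV::'c set)" "\<not> contiguous_ones x"
  shows "g x = g (canon (card (UNIV::'c set)) (card (ones x)) (card (izeros x)))"
proof -
  obtain y where y: "length y = length x" "\<not> contiguous_ones y" "y ! 0" "card (ones y) = card (ones x)"
    "card (izeros y) = card (izeros x)" "g y = g x"
    using shiftA[OF assms] by blast
  have "g y = g (canon (length y) (card (ones y)) (card (izeros y)))"
    using swapB[OF _ y(2) y(3)] y(1) assms(1) by simp
  then show ?thesis using y assms(1) by simp
qed

end

theorem mainTheorem13:
  fixes g :: "bool list \<Rightarrow> real"
    and f :: "'c::finite profile \<Rightarrow> 'c list set"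
  assumes m3: "card (UNIV :: 'c set) \<ge> 3"
    and g_nonneg: "\<And>x. length x = card (UNIV :: 'c set) \<Longrightarrow> g x \<ge> 0"
    and g_zero: "\<And>x. length x = card (UNIV :: 'c set) \<Longrightarrow> (g x = 0 \<longleftrightarrow> contiguous_ones x)"
    and g_rev: "\<And>x. length x = card (UNIV :: 'c set) \<Longrightarrow> g x = g (rev x)"
    and f_scoring: "f = scoring_rule (\<lambda>A ax. g (approval_vector A ax))"
    and mono: "ballot_monotone f"
  shows "\<exists>h :: nat \<Rightarrow> nat \<Rightarrow> real. \<forall>(A :: 'c set) (ax :: 'c list). is_ballot A \<and> ax \<in> axes \<and> \<not> is_interval A ax \<longrightarrow>
            g (approval_vector A ax) = h (card A) (card (interfering A ax))"
proof -
  have st: "setting g f"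
    unfolding setting_def using g_nonneg g_zero g_rev f_scoring mono by blast
  show ?thesis
  proof (intro exI allI impI)
    fix A :: "'c set" and ax :: "'c list"
    assume a: "is_ballot A \<and> ax \<in> axes \<and> \<not> is_interval A ax"
    then have ax: "is_axis ax" unfolding axes_def by simp
    define x where "x = approval_vector A ax"
    have lx: "length x = card (UNIV :: 'c set)" unfolding x_def using axis_len[OF ax] by simp
    have nx: "\<not> contiguous_ones x" unfolding x_def using contig_iff[OF ax] a by simp
    have "g x = g (canon (card (UNIV::'c set)) (card (ones x)) (card (izeros x)))"
      using setting.main_vec[OF st lx nx] .
    then show "g (approval_vector A ax) = g (canon (card (UNIV::'c set)) (card A) (card (interfering A ax)))"
      unfolding x_def using card_ones_av[OF ax] card_izeros_av[OF ax] by simp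
  qed
qed


end
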